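(* Suppose $x_1=-x_2\neq0$. Then the condition number $\kappa$ of $M$ has density, for $\sigma\ge1$, $$f(\sigma;L,\beta)=\frac{2\,\sigma^{\frac{\beta L}{2}-\frac{\beta}{2}-1}\,\Gamma\!\left(\beta L-\beta+1\right)(\sigma+1)^{-\beta(L-1)}}{\beta(L-1)\,\Gamma\!\left(\frac{\beta}{2}(L-1)\right)^{2}}.$$ In particular, for $L=2$ and $\beta=1$, $f(\sigma;2,1)=\dfrac{2}{\pi\sqrt{\sigma}\,(\sigma+1)}$.
   Context: Fix an integer $L\ge 2$, a real parameter $\beta>0$, and nonzero reals $x_1,x_2$. Let $\Sigma=\mathrm{diag}(x_1,x_2)$. For $k>0$, $\chi_k$ denotes the distribution on $[0,\infty)$ with density $\frac{x^{k-1}e^{-x^{2}/2}}{2^{k/2-1}\Gamma(k/2)}$. Let $a,b,c$ be independent random variables with $a\sim\chi_{\beta L}$, $b\sim\chi_{\beta}$ and $c\sim\chi_{\beta(L-1)}$. Set $R=\begin{pmatrix}a&b\\0&c\end{pmatrix}$ and $M=R\Sigma R^{T}$. For $\beta=1,2,4$, $M$ has the same eigenvalues as $W^{*}W\Sigma$, where $W$ is $L\times2$ with i.i.d. standard real, complex or quaternionic Gaussian entries. The condition number is $\kappa=|\lambda_{\max}|/|\lambda_{\min}|\ge1$, the ratio of the larger to the smaller absolute value of the two eigenvalues of $M$. *)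

theory Defs
  imports "HOL-Probability.Probability"
begin

definition chi_density :: "real \<Rightarrow> real \<Rightarrow> real" where
  "chi_density k x = (if 0 < x then
      x powr (k - 1) * exp (- (x^2) / 2) / (2 powr (k / 2 - 1) * Gamma (k / 2)) else 0)"

definition Rmat :: "real \<Rightarrow> real \<Rightarrow> real \<Rightarrow> real^2^2" where
  "Rmat a b c = vector [vector [a, b], vector [0, c]]"

definition Sigma_mat :: "real \<Rightarrow> real \<Rightarrow> real^2^2" where
  "Sigma_mat x1 x2 = vector [vector [x1, 0], vector [0, x2]]"

definition Mmat :: "real \<Rightarrow> real \<Rightarrow> real \<Rightarrow> real \<Rightarrow> real \<Rightarrow> real^2^2" where
  "Mmat x1 x2 a b c = Rmat a b c ** Sigma_mat x1 x2 ** transpose (Rmat a b c)"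

definition real_eigenvalues :: "real^'n^'n \<Rightarrow> real set" where
  "real_eigenvalues A = {l. \<exists>v. v \<noteq> 0 \<and> A *v v = l *\<^sub>R v}"

definition cond_number :: "real^'n^'n \<Rightarrow> real" where
  "cond_number A = Max (abs ` real_eigenvalues A) / Min (abs ` real_eigenvalues A)"

definition f_kappa :: "nat \<Rightarrow> real \<Rightarrow> real \<Rightarrow> real" where
  "f_kappa L \<beta> \<sigma> =
     2 * \<sigma> powr (\<beta> * real L / 2 - \<beta> / 2 - 1) * Gamma (\<beta> * real L - \<beta> + 1)
       * (\<sigma> + 1) powr (- \<beta> * (real L - 1))
     / (\<beta> * (real L - 1) * (Gamma (\<beta> / 2 * (real L - 1)))^2)"

end

theory Submission
  imports Defs "HOL-Library.Quadratic_Discriminant"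
begin

lemma mat22_mult_vec:
  fixes p q s r :: real
  shows "(vector [vector [p, q], vector [s, r]] :: real^2^2) *v v
         = vector [p * v$1 + q * v$2, s * v$1 + r * v$2]"
  by (auto simp: vec_eq_iff matrix_vector_mult_def sum_2 forall_2 vector_2)

lemma vec2_eq0: "(v::real^2) = 0 \<longleftrightarrow> v$1 = 0 \<and> v$2 = 0"
  by (auto simp: vec_eq_iff forall_2)

lemma eig22:
  fixes p q s r :: real
  shows "real_eigenvalues (vector [vector [p, q], vector [s, r]] :: real^2^2)
         = {l. l^2 - (p + r) * l + (p * r - q * s) = 0}"
proof (safe)
  fix l assume "l \<in> real_eigenvalues (vector [vector [p, q], vector [s, r]] :: real^2^2)"
  then obtain v :: "real^2" where v: "v \<noteq> 0" "vector [p * v$1 + q * v$2, s * v$1 + r * v$2] = l *\<^sub>R v"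
    by (auto simp: real_eigenvalues_def mat22_mult_vec)
  then have e1: "p * v$1 + q * v$2 = l * v$1" and e2: "s * v$1 + r * v$2 = l * v$2"
    by (auto simp: vec_eq_iff forall_2 vector_2)
  have f1: "(p - l) * v$1 = - q * v$2" and f2: "s * v$1 = (l - r) * v$2"
    using e1 e2 by (simp_all add: algebra_simps)
  have "(l^2 - (p + r) * l + (p * r - q * s)) * v$1 = (r - l) * ((p - l) * v$1) - q * (s * v$1)"
    by (simp add: algebra_simps power2_eq_square)
  also have "\<dots> = 0" unfolding f1 f2 by (simp add: algebra_simps)
  finally have g1: "(l^2 - (p + r) * l + (p * r - q * s)) * v$1 = 0" .
  have h: "(r - l) * v$2 = - (s * v$1)" using f2 by (simp add: algebra_simps)
  have "(l^2 - (p + r) * l + (p * r - q * s)) * v$2 = (p - l) * ((r - l) * v$2) - q * s * v$2"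
    by (simp add: algebra_simps power2_eq_square)
  also have "\<dots> = (p - l) * (- (s * v$1)) - q * s * v$2" by (simp only: h)
  also have "\<dots> = s * (- ((p - l) * v$1) - q * v$2)" by (simp add: algebra_simps)
  also have "\<dots> = 0" unfolding f1 by simp
  finally have g2: "(l^2 - (p + r) * l + (p * r - q * s)) * v$2 = 0" .
  note g1 moreover note g2
  ultimately show "l^2 - (p + r) * l + (p * r - q * s) = 0"
    using v(1) by (auto simp: vec2_eq0)
next
  fix l assume d: "l^2 - (p + r) * l + (p * r - q * s) = 0"
  show "l \<in> real_eigenvalues (vector [vector [p, q], vector [s, r]] :: real^2^2)"
  proof (cases "p - l = 0 \<and> q = 0")
    case False
    define v :: "real^2" where "v = vector [q, l - p]"
    have "v \<noteq> 0" using False by (auto simp: v_def vec2_eq0 vector_2)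
    moreover have "vector [p * v$1 + q * v$2, s * v$1 + r * v$2] = l *\<^sub>R v"
      using d by (auto simp: v_def vec_eq_iff forall_2 vector_2 algebra_simps power2_eq_square)
    ultimately show ?thesis by (auto simp: real_eigenvalues_def mat22_mult_vec)
  next
    case True
    show ?thesis
    proof (cases "r - l = 0 \<and> s = 0")
      case False
      define v :: "real^2" where "v = vector [r - l, - s]"
      have "v \<noteq> 0" using False by (auto simp: v_def vec2_eq0 vector_2)
      moreover have "vector [p * v$1 + q * v$2, s * v$1 + r * v$2] = l *\<^sub>R v"
        using True by (auto simp: v_def vec_eq_iff forall_2 vector_2 algebra_simps)
      ultimately show ?thesis by (auto simp: real_eigenvalues_def mat22_mult_vec)
    next
      case True2: True
      define v :: "real^2" where "v = vector [1, 0]"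
      have "v \<noteq> 0" by (auto simp: v_def vec2_eq0 vector_2)
      moreover have "vector [p * v$1 + q * v$2, s * v$1 + r * v$2] = l *\<^sub>R v"
        using True True2 by (auto simp: v_def vec_eq_iff forall_2 vector_2 algebra_simps)
      ultimately show ?thesis by (auto simp: real_eigenvalues_def mat22_mult_vec)
    qed
  qed
qed

lemma Mmat_eq:
  "Mmat x1 x2 a b c = vector [vector [x1*a^2 + x2*b^2, x2*b*c], vector [x2*b*c, x2*c^2]]"
  by (auto simp: Mmat_def Rmat_def Sigma_mat_def vec_eq_iff matrix_matrix_mult_def transpose_def
      sum_2 forall_2 vector_2 power2_eq_square algebra_simps)

lemma eig22_pair:
  fixes p q s r l1 l2 :: real
  assumes "l1 + l2 = p + r" "l1 * l2 = p * r - q * s"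
  shows "real_eigenvalues (vector [vector [p, q], vector [s, r]] :: real^2^2) = {l1, l2}"
proof -
  have "\<And>l. l^2 - (p + r) * l + (p * r - q * s) = (l - l1) * (l - l2)"
    using assms by (simp add: algebra_simps power2_eq_square flip: assms)
  then show ?thesis unfolding eig22 by auto
qed

lemma cond_number_pair:
  fixes p q s r l1 l2 :: real
  assumes "l1 + l2 = p + r" "l1 * l2 = p * r - q * s"
  shows "cond_number (vector [vector [p, q], vector [s, r]] :: real^2^2)
     = max \<bar>l1\<bar> \<bar>l2\<bar> / min \<bar>l1\<bar> \<bar>l2\<bar>"
  unfolding cond_number_def eig22_pair[OF assms] by simp

definition condfun :: "real \<Rightarrow> real \<Rightarrow> real \<Rightarrow> real \<Rightarrow> real \<Rightarrow> real" where
  "condfun x1 x2 a b c = (let p = x1*a^2 + x2*b^2; q = x2*b*c; r = x2*c^2;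
      T = p + r; d = sqrt ((p - r)^2 + 4 * q^2);
      l1 = (T + d) / 2; l2 = (T - d) / 2 in max \<bar>l1\<bar> \<bar>l2\<bar> / min \<bar>l1\<bar> \<bar>l2\<bar>)"

lemma cond_Mmat_condfun: "cond_number (Mmat x1 x2 a b c) = condfun x1 x2 a b c"
proof -
  define p where "p = x1*a^2 + x2*b^2"
  define q where "q = x2*b*c"
  define r where "r = x2*c^2"
  define d where "d = sqrt ((p - r)^2 + 4 * q^2)"
  have dd: "d^2 = (p - r)^2 + 4 * q^2" unfolding d_def by simp
  have "(p + r + d) / 2 + (p + r - d) / 2 = p + r" by (simp add: field_simps)
  moreover have "((p + r + d) / 2) * ((p + r - d) / 2) = p * r - q * q"
    using dd by (simp add: field_simps power2_eq_square)
  ultimately show ?thesis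
    unfolding Mmat_eq condfun_def Let_def p_def[symmetric] q_def[symmetric] r_def[symmetric] d_def[symmetric]
    by (rule cond_number_pair)
qed

lemma condfun_measurable[measurable]:
  assumes [measurable]: "f \<in> borel_measurable M" "g \<in> borel_measurable M" "h \<in> borel_measurable M"
  shows "(\<lambda>w. condfun x1 x2 (f w) (g w) (h w)) \<in> borel_measurable M"
  unfolding condfun_def Let_def by measurable

lemma cond_param:
  fixes x a c t :: real
  assumes "x \<noteq> 0" "a > 0" "c > 0" "t > c / a"
  shows "cond_number (Mmat x (-x) a (sqrt ((a - c / t) * (a + c * t))) c) = max (t^2) (1 / t^2)"
proof -
  have t0: "t > 0" using assms by (smt (verit) divide_pos_pos)
  have "c / t < a" using assms t0 by (simp add: field_simps mult.commute)
  hence pos: "(a - c / t) * (a + c * t) \<ge> 0" using assms t0 by (intro mult_nonneg_nonneg) auto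
  define Y where "Y = sqrt ((a - c / t) * (a + c * t))"
  have Y2: "Y^2 = (a - c / t) * (a + c * t)" unfolding Y_def using pos by simp
  have s1: "x * a * c / t + (- x * a * c * t) = (x*a^2 + -x*Y^2) + -x*c^2"
    unfolding Y2 using t0 by (simp add: field_simps power2_eq_square)
  have s2: "(x * a * c / t) * (- x * a * c * t) = (x*a^2 + -x*Y^2) * (-x*c^2) - (-x*Y*c) * (-x*Y*c)"
    using t0 by (simp add: field_simps power2_eq_square)
  have "cond_number (Mmat x (-x) a Y c) = max \<bar>x * a * c / t\<bar> \<bar>- x * a * c * t\<bar> / min \<bar>x * a * c / t\<bar> \<bar>- x * a * c * t\<bar>"
    unfolding Mmat_eq by (rule cond_number_pair[OF s1 s2])
  also have "\<dots> = max (t^2) (1 / t^2)"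
  proof -
    have e1: "\<bar>x * a * c / t\<bar> = (\<bar>x\<bar> * a * c) * (1/t)" using assms t0 by (simp add: abs_mult)
    have e2: "\<bar>- x * a * c * t\<bar> = (\<bar>x\<bar> * a * c) * t" using assms t0 by (simp add: abs_mult)
    have k: "\<bar>x\<bar> * a * c > 0" using assms by simp
    have m: "max (K * u) (K * v) / min (K * u) (K * v) = max u v / min u v" if "K > 0" for K u v :: real
      using that by (cases "u \<le> v") (auto simp: max_def min_def)
    have r: "max (1/t) t / min (1/t) t = max (t^2) (1/t^2)"
    proof (cases "t \<le> 1")
      case True
      hence "t * t \<le> 1" using t0 by (metis mult_le_one less_imp_le)
      moreover have "(t*t)*(t*t) \<le> 1" using \<open>t * t \<le> 1\<close> t0 by (metis mult_le_one mult_nonneg_nonneg less_imp_le)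
      ultimately have "t \<le> 1/t" "t^2 \<le> 1/t^2" using t0 by (simp_all add: field_simps power2_eq_square)
      thus ?thesis using t0 by (simp add: max_def min_def field_simps power2_eq_square)
    next
      case False
      hence "t * t \<ge> 1" using t0 by (smt (verit) mult_le_cancel_left1)
      moreover have "(t*t)*(t*t) \<ge> 1" using \<open>t * t \<ge> 1\<close> by (metis mult_mono order.trans zero_le_one mult_1_left)
      ultimately have "1/t \<le> t" "1/t^2 \<le> t^2" using t0 by (simp_all add: field_simps power2_eq_square)
      thus ?thesis using t0 by (simp add: max_def min_def field_simps power2_eq_square)
    qed
    show ?thesis unfolding e1 e2 m[OF k] r ..
  qed
  finally show ?thesis unfolding Y_def .
qed


lemma SUP_indicator_incseq:
  fixes A :: "nat \<Rightarrow> 'a set"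
  shows "(SUP n. indicator (A n) x :: ennreal) = indicator (\<Union>n. A n) x"
proof (cases "x \<in> (\<Union>n. A n)")
  case True
  then obtain m where m: "x \<in> A m" by auto
  have "(SUP n. indicator (A n) x :: ennreal) \<le> 1"
    by (intro SUP_least) (auto simp: indicator_def)
  moreover have "1 \<le> (SUP n. indicator (A n) x :: ennreal)"
    using m by (intro SUP_upper2[of m]) auto
  ultimately show ?thesis using True by (simp add: antisym)
next
  case False
  then show ?thesis by (simp add: indicator_def)
qed

lemma nn_subst_mono:
  fixes g g' :: "real \<Rightarrow> real" and F :: "real \<Rightarrow> ennreal" and l u :: "nat \<Rightarrow> real"
  assumes F[measurable]: "F \<in> borel_measurable borel"
    and lu: "\<And>n. l n < u n" "decseq l" "incseq u"
    and D: "D = (\<Union>n. {l n..u n})"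
    and der: "\<And>x. x \<in> D \<Longrightarrow> (g has_real_derivative g' x) (at x)"
    and cont: "continuous_on D g'"
    and nn: "\<And>x. x \<in> D \<Longrightarrow> 0 \<le> g' x"
  shows "(\<integral>\<^sup>+x. F x * indicator (g ` D) x \<partial>lborel)
       = (\<integral>\<^sup>+x. F (g x) * ennreal (g' x) * indicator D x \<partial>lborel)"
proof -
  have sub: "{l n..u n} \<subseteq> D" for n using D by auto
  have nest: "{l n..u n} \<subseteq> {l m..u m}" if "n \<le> m" for n m
    using lu(2,3) that by (auto simp: decseq_def incseq_def intro: order.trans)
  have mono: "g x \<le> g y" if xD: "x \<in> D" and yD: "y \<in> D" and xy: "x \<le> y" for x y
  proof -
    obtain i where "x \<in> {l i..u i}" using xD D by auto
    moreover obtain j where "y \<in> {l j..u j}" using yD D by auto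
    ultimately
    have "x \<in> {l (max i j)..u (max i j)}" "y \<in> {l (max i j)..u (max i j)}"
      using nest[of i "max i j"] nest[of j "max i j"] by auto
    hence "{x..y} \<subseteq> D" using sub[of "max i j"] by auto
    thus ?thesis using der nn xy by (intro deriv_nonneg_imp_mono[of x y g g']) auto
  qed
  have contg: "continuous_on {l n..u n} g" for n
    using der sub[of n] by (intro has_real_derivative_imp_continuous_on[where f'=g']) auto
  have img: "g ` {l n..u n} = {g (l n)..g (u n)}" for n
  proof
    show "g ` {l n..u n} \<subseteq> {g (l n)..g (u n)}"
      using sub[of n] lu(1)[of n] by (auto intro!: mono simp: subset_eq)
    show "{g (l n)..g (u n)} \<subseteq> g ` {l n..u n}"
    proof
      fix y assume "y \<in> {g (l n)..g (u n)}"
      then obtain x where "l n \<le> x" "x \<le> u n" "g x = y"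
        using IVT'[of g "l n" y "u n"] contg[of n] lu(1)[of n] by auto
      thus "y \<in> g ` {l n..u n}" by auto
    qed
  qed
  have gD: "g ` D = (\<Union>n. {g (l n)..g (u n)})" unfolding D img[symmetric] by auto
  have inc1: "incseq (\<lambda>n x. F x * indicator {g (l n)..g (u n)} x)"
    unfolding incseq_def le_fun_def using nest
    by (auto intro!: mult_left_mono simp: img[symmetric] indicator_def split: if_split)
       (use nest in \<open>force\<close>)
  have inc2: "incseq (\<lambda>n x. F (g x) * ennreal (g' x) * indicator {l n..u n} x)"
    unfolding incseq_def le_fun_def
  proof (intro allI impI)
    fix m n :: nat and x :: real assume "m \<le> n"
    hence "indicator {l m..u m} x \<le> (indicator {l n..u n} x :: ennreal)"
      using nest[of m n] by (auto simp: indicator_def)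
    thus "F (g x) * ennreal (g' x) * indicator {l m..u m} x \<le> F (g x) * ennreal (g' x) * indicator {l n..u n} x"
      by (intro mult_left_mono) auto
  qed
  have meas2: "(\<lambda>x. F (g x) * ennreal (g' x) * indicator {l n..u n} x) \<in> borel_measurable lborel" for n
  proof -
    have "continuous_on {l n..u n} g'" using cont sub by (rule continuous_on_subset)
    hence [measurable]: "set_borel_measurable borel {l n..u n} g'" "set_borel_measurable borel {l n..u n} g"
      using contg[of n] borel_measurable_continuous_on_indicator[of "{l n..u n}" g']
        borel_measurable_continuous_on_indicator[of "{l n..u n}" g] \<open>continuous_on {l n..u n} g'\<close>
      unfolding set_borel_measurable_def by auto
    have "(\<lambda>x. F (indicator {l n..u n} x *\<^sub>R g x) * ennreal (indicator {l n..u n} x *\<^sub>R g' x) * indicator {l n..u n} x) \<in> borel_measurable lborel"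
      using \<open>set_borel_measurable borel {l n..u n} g'\<close> \<open>set_borel_measurable borel {l n..u n} g\<close>
      unfolding set_borel_measurable_def by measurable
    also have "(\<lambda>x. F (indicator {l n..u n} x *\<^sub>R g x) * ennreal (indicator {l n..u n} x *\<^sub>R g' x) * indicator {l n..u n} x)
        = (\<lambda>x. F (g x) * ennreal (g' x) * indicator {l n..u n} x)"
      by (auto simp: indicator_def fun_eq_iff)
    finally show ?thesis .
  qed
  have "(\<integral>\<^sup>+x. F x * indicator (g ` D) x \<partial>lborel)
      = (\<integral>\<^sup>+x. (SUP n. F x * indicator {g (l n)..g (u n)} x) \<partial>lborel)"
    unfolding gD by (simp add: SUP_mult_left_ennreal[symmetric] SUP_indicator_incseq)
  also have "\<dots> = (SUP n. \<integral>\<^sup>+x. F x * indicator {g (l n)..g (u n)} x \<partial>lborel)"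
    by (rule nn_integral_monotone_convergence_SUP[OF inc1]) measurable
  also have "\<dots> = (SUP n. \<integral>\<^sup>+x. F (g x) * ennreal (g' x) * indicator {l n..u n} x \<partial>lborel)"
  proof (rule SUP_cong[OF refl])
    fix n
    show "(\<integral>\<^sup>+x. F x * indicator {g (l n)..g (u n)} x \<partial>lborel)
        = (\<integral>\<^sup>+x. F (g x) * ennreal (g' x) * indicator {l n..u n} x \<partial>lborel)"
      using sub[of n] lu(1)[of n]
      by (intro nn_integral_substitution_aux[OF F])
         (auto intro: der nn continuous_on_subset[OF cont])
  qed
  also have "\<dots> = (\<integral>\<^sup>+x. (SUP n. F (g x) * ennreal (g' x) * indicator {l n..u n} x) \<partial>lborel)"
    by (rule nn_integral_monotone_convergence_SUP[OF inc2 meas2, symmetric])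
  also have "\<dots> = (\<integral>\<^sup>+x. F (g x) * ennreal (g' x) * indicator D x \<partial>lborel)"
    unfolding D by (simp add: SUP_mult_left_ennreal[symmetric] SUP_indicator_incseq)
  finally show ?thesis .
qed

lemma nn_subst_antimono:
  fixes g g' :: "real \<Rightarrow> real" and F :: "real \<Rightarrow> ennreal" and l u :: "nat \<Rightarrow> real"
  assumes F[measurable]: "F \<in> borel_measurable borel"
    and lu: "\<And>n. l n < u n" "decseq l" "incseq u"
    and D: "D = (\<Union>n. {l n..u n})"
    and der: "\<And>x. x \<in> D \<Longrightarrow> (g has_real_derivative g' x) (at x)"
    and cont: "continuous_on D g'"
    and np: "\<And>x. x \<in> D \<Longrightarrow> g' x \<le> 0"
  shows "(\<integral>\<^sup>+x. F x * indicator (g ` D) x \<partial>lborel)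
       = (\<integral>\<^sup>+x. F (g x) * ennreal (- g' x) * indicator D x \<partial>lborel)"
proof -
  define D' where "D' = uminus ` D"
  have D': "D' = (\<Union>n. {- u n..- l n})"
    unfolding D'_def D by (auto simp: image_iff) (metis minus_minus atLeastAtMost_iff neg_le_iff_le)+
  have mD': "y \<in> D' \<longleftrightarrow> - y \<in> D" for y unfolding D'_def by force
  have "(\<integral>\<^sup>+x. F x * indicator ((\<lambda>y. g (- y)) ` D') x \<partial>lborel)
      = (\<integral>\<^sup>+x. F (g (- x)) * ennreal (- g' (- x)) * indicator D' x \<partial>lborel)"
  proof (rule nn_subst_mono[OF F _ _ _ D'])
    show "- u n < - l n" for n using lu(1)[of n] by simp
    show "decseq (\<lambda>n. - u n)" using lu(3) by (simp add: decseq_def incseq_def)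
    show "incseq (\<lambda>n. - l n)" using lu(2) by (simp add: decseq_def incseq_def)
    show "((\<lambda>y. g (- y)) has_real_derivative - g' (- x)) (at x)" if "x \<in> D'" for x
    proof -
      have "((\<lambda>y. g (- y)) has_real_derivative g' (- x) * (-1)) (at x)"
        using der[of "-x"] that mD'[of x]
        by (intro DERIV_chain'[where f=uminus]) (auto intro!: derivative_eq_intros)
      thus ?thesis by simp
    qed
    have "continuous_on D' (g' \<circ> uminus)"
      by (intro continuous_on_compose continuous_intros) (simp add: D'_def image_comp cont)
    thus "continuous_on D' (\<lambda>x. - g' (- x))" by (auto simp: o_def intro!: continuous_intros)
    show "0 \<le> - g' (- x)" if "x \<in> D'" for x using np[of "-x"] that mD'[of x] by auto
  qed
  also have "(\<lambda>y. g (- y)) ` D' = g ` D" unfolding D'_def by (auto simp: image_iff)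
  also have "(\<integral>\<^sup>+x. F (g (- x)) * ennreal (- g' (- x)) * indicator D' x \<partial>lborel)
      = (\<integral>\<^sup>+x. F (g x) * ennreal (- g' x) * indicator D x \<partial>lborel)"
  proof -
    have Dm: "D \<in> sets borel" unfolding D by measurable
    have contg: "continuous_on D g" using der by (intro has_real_derivative_imp_continuous_on) auto
    have [measurable]: "(\<lambda>x. indicator D x *\<^sub>R g x) \<in> borel_measurable borel"
      "(\<lambda>x. indicator D x *\<^sub>R g' x) \<in> borel_measurable borel"
      using borel_measurable_continuous_on_indicator[OF Dm contg]
        borel_measurable_continuous_on_indicator[OF Dm cont] by auto
    have "(\<lambda>x. F (indicator D x *\<^sub>R g x) * ennreal (- (indicator D x *\<^sub>R g' x)) * indicator D x) \<in> borel_measurable borel"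
      using Dm by measurable
    also have "(\<lambda>x. F (indicator D x *\<^sub>R g x) * ennreal (- (indicator D x *\<^sub>R g' x)) * indicator D x)
        = (\<lambda>x. F (g x) * ennreal (- g' x) * indicator D x)" by (auto simp: fun_eq_iff indicator_def)
    finally have m: "(\<lambda>x. F (g x) * ennreal (- g' x) * indicator D x) \<in> borel_measurable borel" .
    show ?thesis
      using nn_integral_real_affine[OF m, of "-1" 0] by (simp add: mD' indicator_def)
  qed
  finally show ?thesis .
qed


definition Yf :: "real \<Rightarrow> real \<Rightarrow> real \<Rightarrow> real" where
  "Yf a c t = sqrt ((a - c / t) * (a + c * t))"
definition Yd :: "real \<Rightarrow> real \<Rightarrow> real \<Rightarrow> real" where
  "Yd a c t = a * c * (1 + 1 / t^2) / (2 * Yf a c t)"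
definition Kf :: "real \<Rightarrow> real" where
  "Kf t = max (t^2) (1 / t^2)"

lemma chi_density_nonneg: "k > 0 \<Longrightarrow> chi_density k x \<ge> 0"
  unfolding chi_density_def by (auto intro!: divide_nonneg_pos)

lemma chi_density_measurable[measurable]: "chi_density k \<in> borel_measurable borel"
  unfolding chi_density_def by measurable

lemma Ioi_as_UN:
  fixes z :: real
  shows "{z<..} = (\<Union>n. {z + 1 / Suc n..z + 2 + real n})"
proof (intro equalityI subsetI)
  fix t assume "t \<in> {z<..}"
  hence t: "t - z > 0" by simp
  obtain n1 where n1: "inverse (real (Suc n1)) < t - z" using reals_Archimedean[OF t] by auto
  obtain n2 where n2: "t - z \<le> real n2" using real_arch_simple by auto
  let ?n = "max n1 n2"
  have "1 / Suc ?n \<le> 1 / Suc n1" by (intro divide_left_mono) auto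
  hence "z + 1 / Suc ?n \<le> t" using n1 by (simp add: inverse_eq_divide)
  moreover have "t \<le> z + 2 + real ?n" using n2 by (smt (verit) of_nat_le_iff max.cobounded2)
  ultimately show "t \<in> (\<Union>n. {z + 1 / Suc n..z + 2 + real n})" by auto
next
  fix t assume "t \<in> (\<Union>n. {z + 1 / Suc n..z + 2 + real n})"
  then obtain n where "t \<in> {z + 1 / Suc n..z + 2 + real n}" by auto
  moreover have "1 / real (Suc n) > 0" by simp
  ultimately show "t \<in> {z<..}" by (smt (verit) atLeastAtMost_iff greaterThan_iff)
qed

lemma Yf_image:
  assumes a: "a > 0" and c: "c > 0"
  shows "Yf a c ` {c / a<..} = {0<..}"
proof (intro equalityI subsetI)
  fix yy assume "yy \<in> Yf a c ` {c / a<..}"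
  then obtain t where "t \<in> {c / a<..}" and yy: "yy = Yf a c t" by auto
  hence t: "t > c / a" by simp
  have t0: "t > 0" using t a c by (smt (verit) divide_pos_pos)
  have "c / t < a" using t a c t0 by (simp add: field_simps mult.commute)
  hence "(a - c / t) * (a + c * t) > 0" using a c t0 by (intro mult_pos_pos) (auto intro: add_pos_pos)
  thus "yy \<in> {0<..}" by (simp add: Yf_def yy)
next
  fix y :: real assume "y \<in> {0<..}"
  hence y: "y > 0" by simp
  define w where "w = a^2 - c^2 - y^2"
  define t where "t = (- w + sqrt (w^2 + 4 * a^2 * c^2)) / (2 * a * c)"
  have "sqrt (w^2 + 4 * a^2 * c^2) > sqrt (w^2)"
    using a c by (intro real_sqrt_less_mono) auto
  hence sq: "sqrt (w^2 + 4 * a^2 * c^2) > w" by simp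
  have t0: "t > 0" unfolding t_def using sq a c by (intro divide_pos_pos) auto
  have ss: "(sqrt (w^2 + 4 * a^2 * c^2))^2 = w^2 + 4 * a^2 * c^2" by simp
  have quad: "a * c * t^2 + w * t - a * c = 0"
    unfolding t_def using a c ss by (simp add: field_simps power2_eq_square)
  have q: "(a - c / t) * (a + c * t) = y^2"
  proof -
    have "(a - c / t) * (a + c * t) = (a * c * t^2 + (a^2 - c^2) * t - a * c) / t"
      using t0 by (simp add: field_simps power2_eq_square)
    also have "\<dots> = y^2" using quad t0 unfolding w_def by (simp add: field_simps power2_eq_square)
    finally show ?thesis .
  qed
  have "a + c * t > 0" using a c t0 by (simp add: add_pos_pos)
  hence "a - c / t > 0" using q y by (smt (verit) mult_le_0_iff zero_less_power)
  hence "t > c / a" using t0 a by (simp add: field_simps)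
  moreover have "Yf a c t = y" unfolding Yf_def q using y by simp
  ultimately show "y \<in> Yf a c ` {c / a<..}" by force
qed

lemma Yf_pos:
  assumes a: "a > 0" and c: "c > 0" and t: "t > c / a"
  shows "t > 0" "(a - c / t) * (a + c * t) > 0" "Yf a c t > 0"
proof -
  show t0: "t > 0" using t a c by (smt (verit) divide_pos_pos)
  have "c / t < a" using t a c t0 by (simp add: field_simps mult.commute)
  thus q: "(a - c / t) * (a + c * t) > 0" using a c t0 by (intro mult_pos_pos) (auto intro: add_pos_pos)
  thus "Yf a c t > 0" by (simp add: Yf_def)
qed

lemma Yf_deriv:
  assumes a: "a > 0" and c: "c > 0" and t: "t > c / a"
  shows "(Yf a c has_real_derivative Yd a c t) (at t)"
proof -
  note p = Yf_pos[OF a c t]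
  have "((\<lambda>t. sqrt ((a - c / t) * (a + c * t))) has_real_derivative
        (((c / t^2) * (a + c * t) + (a - c / t) * c) / (2 * sqrt ((a - c / t) * (a + c * t))))) (at t)"
    apply (rule DERIV_cong)
     apply (rule derivative_eq_intros refl | use p in force)+
    using p apply (simp add: field_simps power2_eq_square)
    done
  moreover have "((c / t^2) * (a + c * t) + (a - c / t) * c) / (2 * sqrt ((a - c / t) * (a + c * t))) = Yd a c t"
    unfolding Yd_def Yf_def using p by (simp add: field_simps power2_eq_square)
  ultimately show ?thesis unfolding Yf_def[abs_def] by simp
qed

lemma stepB:
  fixes G :: "real \<Rightarrow> ennreal"
  assumes G[measurable]: "G \<in> borel_measurable borel"
    and x: "x \<noteq> 0" and a: "a > 0" and c: "c > 0" and k: "k > 0"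
  shows "(\<integral>\<^sup>+b. G (condfun x (-x) a b c) * ennreal (chi_density k b) \<partial>lborel)
       = (\<integral>\<^sup>+t. G (Kf t) * ennreal (chi_density k (Yf a c t) * Yd a c t) * indicator {c/a<..} t \<partial>lborel)"
proof -
  define F where "F b = G (condfun x (-x) a b c) * ennreal (chi_density k b)" for b
  have Fm[measurable]: "F \<in> borel_measurable borel" unfolding F_def by measurable
  have "(\<integral>\<^sup>+b. G (condfun x (-x) a b c) * ennreal (chi_density k b) \<partial>lborel)
      = (\<integral>\<^sup>+b. F b * indicator (Yf a c ` {c/a<..}) b \<partial>lborel)"
    unfolding Yf_image[OF a c] F_def
    by (intro nn_integral_cong) (auto simp: indicator_def chi_density_def)
  also have "\<dots> = (\<integral>\<^sup>+t. F (Yf a c t) * ennreal (Yd a c t) * indicator {c/a<..} t \<partial>lborel)"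
  proof (rule nn_subst_mono[OF Fm _ _ _ Ioi_as_UN])
    show "c / a + 1 / real (Suc n) < c / a + 2 + real n" for n
    proof -
      have "1 / real (Suc n) \<le> 1" by simp
      thus ?thesis by linarith
    qed
    show "decseq (\<lambda>n. c / a + 1 / real (Suc n))"
      by (auto simp: decseq_def intro!: divide_left_mono)
    show "incseq (\<lambda>n. c / a + 2 + real n)" by (auto simp: incseq_def)
    show "(Yf a c has_real_derivative Yd a c t) (at t)" if "t \<in> {c / a<..}" for t
      using Yf_deriv[OF a c] that by simp
    show "0 \<le> Yd a c t" if "t \<in> {c / a<..}" for t
      using Yf_pos[OF a c, of t] that a c unfolding Yd_def
      by (intro divide_nonneg_pos mult_nonneg_nonneg) (auto intro: add_nonneg_nonneg)
    show "continuous_on {c / a<..} (Yd a c)"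
    proof -
      have "continuous_on {c / a<..} (\<lambda>t. a * c * (1 + 1 / t^2) / (2 * sqrt ((a - c / t) * (a + c * t))))"
      proof (intro continuous_intros ballI)
        fix t assume "t \<in> {c / a<..}"
        hence t: "c / a < t" by simp
        show "t \<noteq> 0" using Yf_pos(1)[OF a c t] by simp
        show "t^2 \<noteq> 0" using Yf_pos(1)[OF a c t] by simp
        show "2 * sqrt ((a - c / t) * (a + c * t)) \<noteq> 0" using Yf_pos(2)[OF a c t] by (simp only: mult_eq_0_iff real_sqrt_eq_zero_cancel_iff) auto
      qed
      thus ?thesis unfolding Yd_def[abs_def] Yf_def by simp
    qed
  qed
  also have "\<dots> = (\<integral>\<^sup>+t. G (Kf t) * ennreal (chi_density k (Yf a c t) * Yd a c t) * indicator {c/a<..} t \<partial>lborel)"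
  proof (intro nn_integral_cong)
    fix t
    show "F (Yf a c t) * ennreal (Yd a c t) * indicator {c/a<..} t
        = G (Kf t) * ennreal (chi_density k (Yf a c t) * Yd a c t) * indicator {c/a<..} t"
    proof (cases "t > c / a")
      case True
      have "condfun x (-x) a (Yf a c t) c = Kf t"
        using cond_param[OF x a c True] unfolding cond_Mmat_condfun Yf_def Kf_def .
      moreover have "Yd a c t \<ge> 0"
        using Yf_pos[OF a c True] a c unfolding Yd_def
        by (intro divide_nonneg_pos mult_nonneg_nonneg) (auto intro: add_nonneg_nonneg)
      ultimately show ?thesis using True chi_density_nonneg[OF k]
        by (simp add: F_def ennreal_mult mult.assoc)
    qed simp
  qed
  finally show ?thesis .
qed


definition Zc :: "real \<Rightarrow> real" where "Zc k = 2 powr (k / 2 - 1) * Gamma (k / 2)"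

lemma Zc_pos: "k > 0 \<Longrightarrow> Zc k > 0"
  unfolding Zc_def by (intro mult_pos_pos) (auto intro: Gamma_real_pos)

lemma chi_density_pos_eq: "x > 0 \<Longrightarrow> chi_density k x = x powr (k - 1) * exp (- (x^2) / 2) / Zc k"
  unfolding chi_density_def Zc_def by simp

definition jfun :: "real \<Rightarrow> real \<Rightarrow> real \<Rightarrow> real \<Rightarrow> real \<Rightarrow> real \<Rightarrow> real" where
  "jfun ka kb kc a c t = (if a > 0 \<and> c > 0 \<and> t > c / a then
     chi_density ka a * chi_density kc c * (chi_density kb (Yf a c t) * Yd a c t) else 0)"

lemma W3:
  assumes k: "ka = kb + kc" "kb > 0" "kc > 0" and t: "t > 0" and c: "c > 0" and al: "\<alpha> > 1 / t"
  shows "c * jfun ka kb kc (c * \<alpha>) c t =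
    c powr (2 * ka - 1) * exp (- (c^2 * (\<alpha> * (2 * \<alpha> + t - 1 / t))) / 2) *
    (\<alpha> powr ka * ((\<alpha> - 1 / t) * (\<alpha> + t)) powr ((kb - 2) / 2) * (1 + 1 / t^2)
      / (2 * Zc ka * Zc kb * Zc kc))"
proof -
  have a0: "\<alpha> > 0" using al t by (smt (verit) divide_pos_pos)
  have ct: "t > c / (c * \<alpha>)" using al c a0 t by (simp add: field_simps)
  define S where "S = (\<alpha> - 1 / t) * (\<alpha> + t)"
  have S0: "S > 0" unfolding S_def using al t a0 by (intro mult_pos_pos) auto
  have Yeq: "Yf (c * \<alpha>) c t = c * sqrt S"
  proof -
    have "(c * \<alpha> - c / t) * (c * \<alpha> + c * t) = c^2 * S" unfolding S_def using t by (simp add: field_simps power2_eq_square)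
    thus ?thesis unfolding Yf_def using c by (simp add: real_sqrt_mult)
  qed
  have sS: "sqrt S > 0" using S0 by simp
  have j: "jfun ka kb kc (c * \<alpha>) c t = chi_density ka (c * \<alpha>) * chi_density kc c *
      (chi_density kb (c * sqrt S) * ((c * \<alpha>) * c * (1 + 1 / t^2) / (2 * (c * sqrt S))))"
    unfolding jfun_def Yd_def Yeq using c a0 ct by simp
  have Zp: "Zc ka > 0" "Zc kb > 0" "Zc kc > 0" using k Zc_pos by auto
  have t2: "1 + 1 / t^2 > 0" by (simp add: add_pos_nonneg)
  have Q: "\<alpha> * (2 * \<alpha> + t - 1 / t) = \<alpha>^2 + 1 + S" unfolding S_def using t by (simp add: field_simps power2_eq_square)
  show ?thesis
    unfolding j S_def[symmetric]
  proof (rule ln_inj_iff[THEN iffD1])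
    show "0 < c * (chi_density ka (c * \<alpha>) * chi_density kc c *
      (chi_density kb (c * sqrt S) * ((c * \<alpha>) * c * (1 + 1 / t^2) / (2 * (c * sqrt S)))))"
      using c a0 sS S0 Zp t2 by (simp add: chi_density_pos_eq)
    show "0 < c powr (2 * ka - 1) * exp (- (c^2 * (\<alpha> * (2 * \<alpha> + t - 1 / t))) / 2) *
    (\<alpha> powr ka * S powr ((kb - 2) / 2) * (1 + 1 / t^2) / (2 * Zc ka * Zc kb * Zc kc))"
      using c a0 sS S0 Zp t2 by simp
    show "ln (c * (chi_density ka (c * \<alpha>) * chi_density kc c *
      (chi_density kb (c * sqrt S) * ((c * \<alpha>) * c * (1 + 1 / t^2) / (2 * (c * sqrt S)))))) =
      ln (c powr (2 * ka - 1) * exp (- (c^2 * (\<alpha> * (2 * \<alpha> + t - 1 / t))) / 2) *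
    (\<alpha> powr ka * S powr ((kb - 2) / 2) * (1 + 1 / t^2) / (2 * Zc ka * Zc kb * Zc kc)))"
      using c a0 sS S0 Zp t2 unfolding Q
      by (simp add: chi_density_pos_eq ln_mult ln_div ln_sqrt power_mult_distrib) (simp add: k algebra_simps add_divide_distrib diff_divide_distrib)
  qed
qed

lemma jfun_measurable[measurable]:
  assumes [measurable]: "f \<in> borel_measurable M" "g \<in> borel_measurable M" "h \<in> borel_measurable M"
  shows "(\<lambda>w. jfun ka kb kc (f w) (g w) (h w)) \<in> borel_measurable M"
  unfolding jfun_def Yf_def Yd_def by measurable

lemma jfun_nonneg: "ka > 0 \<Longrightarrow> kb > 0 \<Longrightarrow> kc > 0 \<Longrightarrow> jfun ka kb kc a c t \<ge> 0"
  unfolding jfun_def using Yf_pos[of a c t]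
  by (auto intro!: mult_nonneg_nonneg chi_density_nonneg divide_nonneg_pos add_nonneg_nonneg simp: Yd_def)

lemma W1:
  assumes kp: "ka > 0" "kb > 0" "kc > 0"
  shows "(\<integral>\<^sup>+a. ennreal (jfun ka kb kc a c t) \<partial>lborel) = (\<integral>\<^sup>+\<alpha>. ennreal (c * jfun ka kb kc (c * \<alpha>) c t) \<partial>lborel)"
proof (cases "c > 0")
  case True
  have "(\<integral>\<^sup>+a. ennreal (jfun ka kb kc a c t) \<partial>lborel)
      = ennreal \<bar>c\<bar> * (\<integral>\<^sup>+\<alpha>. ennreal (jfun ka kb kc (0 + c * \<alpha>) c t) \<partial>lborel)"
    using True by (intro nn_integral_real_affine) auto
  also have "\<dots> = (\<integral>\<^sup>+\<alpha>. ennreal c * ennreal (jfun ka kb kc (c * \<alpha>) c t) \<partial>lborel)"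
    using True by (subst nn_integral_cmult) auto
  also have "\<dots> = (\<integral>\<^sup>+\<alpha>. ennreal (c * jfun ka kb kc (c * \<alpha>) c t) \<partial>lborel)"
    using True jfun_nonneg[OF kp] by (intro nn_integral_cong) (simp add: ennreal_mult)
  finally show ?thesis .
qed (simp add: jfun_def)

definition In :: "real \<Rightarrow> ennreal" where
  "In n = (\<integral>\<^sup>+w. ennreal (indicator {0<..} w * w powr (n - 1) * exp (- (w^2) / 2)) \<partial>lborel)"

lemma W4:
  assumes Q: "Q > 0"
  shows "(\<integral>\<^sup>+c. ennreal (indicator {0<..} c * c powr (n - 1) * exp (- (c^2 * Q) / 2)) \<partial>lborel)
       = ennreal (Q powr (- n / 2)) * In n"
proof -
  define k where "k = 1 / sqrt Q"
  have k: "k > 0" unfolding k_def using Q by simp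
  have "(\<integral>\<^sup>+c. ennreal (indicator {0<..} c * c powr (n - 1) * exp (- (c^2 * Q) / 2)) \<partial>lborel)
      = ennreal \<bar>k\<bar> * (\<integral>\<^sup>+w. ennreal (indicator {0<..} (0 + k * w) * (0 + k * w) powr (n - 1) * exp (- ((0 + k * w)^2 * Q) / 2)) \<partial>lborel)"
    using k by (intro nn_integral_real_affine) auto
  also have "\<dots> = (\<integral>\<^sup>+w. ennreal k * ennreal (k powr (n - 1)) * ennreal (indicator {0<..} w * w powr (n - 1) * exp (- (w^2) / 2)) \<partial>lborel)"
  proof (subst nn_integral_cmult[symmetric], simp, intro nn_integral_cong)
    fix w :: real
    have kk: "k^2 * Q = 1" unfolding k_def using Q by (simp add: power_divide)
    have "(k * w)^2 * Q = w^2" using kk by (simp add: power_mult_distrib algebra_simps)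
    moreover have "indicator {0<..} (k * w) = (indicator {0<..} w :: real)"
      using k by (simp add: indicator_def zero_less_mult_iff)
    moreover have "w > 0 \<Longrightarrow> (k * w) powr (n - 1) = k powr (n - 1) * w powr (n - 1)"
      using k by (simp add: powr_mult)
    ultimately show "ennreal \<bar>k\<bar> * ennreal (indicator {0<..} (0 + k * w) * (0 + k * w) powr (n - 1) * exp (- ((0 + k * w)^2 * Q) / 2))
      = ennreal k * ennreal (k powr (n - 1)) * ennreal (indicator {0<..} w * w powr (n - 1) * exp (- (w^2) / 2))"
      using k by (cases "w > 0") (simp_all add: ennreal_mult[symmetric] indicator_def mult.assoc)
  qed
  also have "\<dots> = ennreal k * ennreal (k powr (n - 1)) * In n"
    unfolding In_def by (subst nn_integral_cmult) auto
  also have "ennreal k * ennreal (k powr (n - 1)) = ennreal (Q powr (- n / 2))"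
  proof -
    have "k * k powr (n - 1) = k powr n" using k by (simp add: powr_diff)
    also have "\<dots> = Q powr (- n / 2)" unfolding k_def using Q
      by (simp add: powr_divide powr_minus_divide powr_half_sqrt[symmetric] powr_powr)
    finally show ?thesis using k by (simp add: ennreal_mult[symmetric])
  qed
  finally show ?thesis .
qed

definition Dv :: "real \<Rightarrow> real \<Rightarrow> ennreal" where
  "Dv ka kb = (\<integral>\<^sup>+v. ennreal (indicator {0<..} v * (2 * v + 1) powr (- ka) * (v * (v + 1)) powr ((kb - 2) / 2)) \<partial>lborel)"

definition rho :: "real \<Rightarrow> real \<Rightarrow> real" where
  "rho kc t = t powr (kc - 1) * (1 + t^2) powr (- kc)"

definition phi :: "real \<Rightarrow> real \<Rightarrow> real \<Rightarrow> real \<Rightarrow> real \<Rightarrow> real" where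
  "phi ka kb kc t \<alpha> = (2 * \<alpha> + t - 1 / t) powr (- ka) * ((\<alpha> - 1 / t) * (\<alpha> + t)) powr ((kb - 2) / 2)
     * (1 + 1 / t^2) / (2 * Zc ka * Zc kb * Zc kc)"

lemma W6:
  assumes k: "ka = kb + kc" "kb > 0" "kc > 0" and t: "t > 0"
  shows "(\<integral>\<^sup>+\<alpha>. ennreal (indicator {1/t<..} \<alpha> * phi ka kb kc t \<alpha>) \<partial>lborel)
       = ennreal (rho kc t / (2 * Zc ka * Zc kb * Zc kc)) * Dv ka kb"
proof -
  define m where "m = t + 1 / t"
  have m: "m > 0" unfolding m_def using t by (simp add: add_pos_pos)
  have Zp: "Zc ka > 0" "Zc kb > 0" "Zc kc > 0" using k Zc_pos by auto
  have "(\<integral>\<^sup>+\<alpha>. ennreal (indicator {1/t<..} \<alpha> * phi ka kb kc t \<alpha>) \<partial>lborel)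
      = ennreal \<bar>m\<bar> * (\<integral>\<^sup>+v. ennreal (indicator {1/t<..} (1/t + m * v) * phi ka kb kc t (1/t + m * v)) \<partial>lborel)"
    using m by (intro nn_integral_real_affine) (auto simp: phi_def)
  also have "\<dots> = (\<integral>\<^sup>+v. ennreal (rho kc t / (2 * Zc ka * Zc kb * Zc kc)) *
       ennreal (indicator {0<..} v * (2 * v + 1) powr (- ka) * (v * (v + 1)) powr ((kb - 2) / 2)) \<partial>lborel)"
  proof -
    have meas: "(\<lambda>v. ennreal (indicator {1/t<..} (1/t + m * v) * phi ka kb kc t (1/t + m * v))) \<in> borel_measurable lborel"
      unfolding phi_def by measurable
    have "ennreal \<bar>m\<bar> * (\<integral>\<^sup>+v. ennreal (indicator {1/t<..} (1/t + m * v) * phi ka kb kc t (1/t + m * v)) \<partial>lborel)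
      = (\<integral>\<^sup>+v. ennreal \<bar>m\<bar> * ennreal (indicator {1/t<..} (1/t + m * v) * phi ka kb kc t (1/t + m * v)) \<partial>lborel)"
      by (rule nn_integral_cmult[symmetric, OF meas])
    also have "\<dots> = (\<integral>\<^sup>+v. ennreal (rho kc t / (2 * Zc ka * Zc kb * Zc kc)) *
       ennreal (indicator {0<..} v * (2 * v + 1) powr (- ka) * (v * (v + 1)) powr ((kb - 2) / 2)) \<partial>lborel)"
  proof (intro nn_integral_cong)
    fix v :: real
    show "ennreal \<bar>m\<bar> * ennreal (indicator {1/t<..} (1/t + m * v) * phi ka kb kc t (1/t + m * v))
      = ennreal (rho kc t / (2 * Zc ka * Zc kb * Zc kc)) *
       ennreal (indicator {0<..} v * (2 * v + 1) powr (- ka) * (v * (v + 1)) powr ((kb - 2) / 2))"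
    proof (cases "v > 0")
      case False
      hence "\<not> 1/t < 1/t + m * v" using m by (simp add: zero_less_mult_iff)
      thus ?thesis using False by (simp add: indicator_def)
    next
      case True
      have v1: "1/t < 1/t + m * v" using m True by simp
      have e1: "2 * (1/t + m * v) + t - 1 / t = m * (2 * v + 1)" unfolding m_def by (simp add: algebra_simps)
      have e2: "(1/t + m * v - 1 / t) * (1/t + m * v + t) = m^2 * (v * (v + 1))" unfolding m_def
        using t by (simp add: field_simps power2_eq_square)
      have "1 + t^2 > 0" by (simp add: add_pos_nonneg)
      hence pos: "rho kc t > 0" unfolding rho_def using t by (intro mult_pos_pos) simp_all
      have "m * phi ka kb kc t (1/t + m * v) = rho kc t / (2 * Zc ka * Zc kb * Zc kc) * ((2 * v + 1) powr (- ka) * (v * (v + 1)) powr ((kb - 2) / 2))"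
        unfolding phi_def e1 e2
      proof (rule ln_inj_iff[THEN iffD1])
        show "0 < m * ((m * (2 * v + 1)) powr - ka * (m\<^sup>2 * (v * (v + 1))) powr ((kb - 2) / 2) * (1 + 1 / t\<^sup>2) /
          (2 * Zc ka * Zc kb * Zc kc))" using m True Zp by (simp add: add_pos_nonneg)
        show "0 < rho kc t / (2 * Zc ka * Zc kb * Zc kc) * ((2 * v + 1) powr - ka * (v * (v + 1)) powr ((kb - 2) / 2))"
          using pos True Zp by simp
        have mt: "m = (1 + t^2) / t" unfolding m_def using t by (simp add: field_simps power2_eq_square)
        have tt: "1 + 1 / t^2 = (1 + t^2) / t^2" using t by (simp add: field_simps)
        show "ln (m * ((m * (2 * v + 1)) powr - ka * (m\<^sup>2 * (v * (v + 1))) powr ((kb - 2) / 2) * (1 + 1 / t\<^sup>2) /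
          (2 * Zc ka * Zc kb * Zc kc))) =
          ln (rho kc t / (2 * Zc ka * Zc kb * Zc kc) * ((2 * v + 1) powr - ka * (v * (v + 1)) powr ((kb - 2) / 2)))"
        proof -
          have t1: "1 + t^2 > 0" by (simp add: add_pos_nonneg)
          have lm: "ln m = ln (1 + t^2) - ln t" unfolding mt using t t1 by (simp add: ln_div)
          have lm2: "ln (m^2) = 2 * ln (1 + t^2) - 2 * ln t" using m lm by (simp add: ln_realpow)
          have lt2: "ln (t^2) = 2 * ln t" using t by (simp add: ln_realpow)
          show ?thesis
            using m True Zp t t1 unfolding rho_def tt
            by (simp add: ln_mult ln_div powr_mult lm lm2 lt2)
               (simp add: k algebra_simps add_divide_distrib diff_divide_distrib)
        qed
      qed
      moreover have "phi ka kb kc t (1/t + m * v) \<ge> 0" unfolding phi_def using Zp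
        by (intro divide_nonneg_pos mult_nonneg_nonneg) (auto intro: add_nonneg_nonneg)
      ultimately show ?thesis using m True v1 pos Zp
        by (simp add: indicator_def ennreal_mult[symmetric])
    qed
  qed
  finally show ?thesis .
  qed
  also have "\<dots> = ennreal (rho kc t / (2 * Zc ka * Zc kb * Zc kc)) * Dv ka kb"
    unfolding Dv_def by (subst nn_integral_cmult) auto
  finally show ?thesis .
qed

lemma Wt:
  assumes k: "ka = kb + kc" "kb > 0" "kc > 0" and t: "t > 0"
  shows "(\<integral>\<^sup>+c. (\<integral>\<^sup>+a. ennreal (jfun ka kb kc a c t) \<partial>lborel) \<partial>lborel)
       = ennreal (rho kc t / (2 * Zc ka * Zc kb * Zc kc)) * Dv ka kb * In (2 * ka)"
proof -
  have kp: "ka > 0" "kb > 0" "kc > 0" using k by auto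
  have "(\<integral>\<^sup>+c. (\<integral>\<^sup>+a. ennreal (jfun ka kb kc a c t) \<partial>lborel) \<partial>lborel)
      = (\<integral>\<^sup>+c. (\<integral>\<^sup>+\<alpha>. ennreal (c * jfun ka kb kc (c * \<alpha>) c t) \<partial>lborel) \<partial>lborel)"
    using W1[OF kp] by simp
  also have "\<dots> = (\<integral>\<^sup>+\<alpha>. (\<integral>\<^sup>+c. ennreal (c * jfun ka kb kc (c * \<alpha>) c t) \<partial>lborel) \<partial>lborel)"
    by (rule lborel_pair.Fubini') measurable
  also have "\<dots> = (\<integral>\<^sup>+\<alpha>. ennreal (indicator {1/t<..} \<alpha> * phi ka kb kc t \<alpha>) * In (2 * ka) \<partial>lborel)"
  proof (intro nn_integral_cong)
    fix \<alpha> :: real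
    show "(\<integral>\<^sup>+c. ennreal (c * jfun ka kb kc (c * \<alpha>) c t) \<partial>lborel) = ennreal (indicator {1/t<..} \<alpha> * phi ka kb kc t \<alpha>) * In (2 * ka)"
    proof (cases "\<alpha> > 1/t")
      case False
      have z: "c * jfun ka kb kc (c * \<alpha>) c t = 0" for c
      proof (cases "c > 0 \<and> c * \<alpha> > 0")
        case True
        hence "\<alpha> > 0" by (meson True order.asym zero_less_mult_iff)
        hence "\<not> t > c / (c * \<alpha>)" using False True t by (simp add: field_simps)
        thus ?thesis by (simp add: jfun_def)
      qed (auto simp: jfun_def)
      have "(\<integral>\<^sup>+c. ennreal (c * jfun ka kb kc (c * \<alpha>) c t) \<partial>lborel) = (\<integral>\<^sup>+(c::real). 0 \<partial>lborel)"
        by (rule nn_integral_cong) (simp add: z)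
      thus ?thesis using False by simp
    next
      case True
      have a0: "\<alpha> > 0" using True t by (smt (verit) divide_pos_pos)
      define Q where "Q = \<alpha> * (2 * \<alpha> + t - 1 / t)"
      have at: "\<alpha> * t > 1" using True t by (simp add: field_simps)
      have "t * t \<ge> 0" by simp
      moreover have "\<alpha> * (t * 2) = 2 * (\<alpha> * t)" by simp
      ultimately have g: "1 < t * t + \<alpha> * (t * 2)" using at by linarith
      have q2: "2 * \<alpha> + t - 1 / t > 0" using g t by (simp add: field_simps)
      have Q0: "Q > 0" unfolding Q_def using a0 q2 by simp
      define \<psi> where "\<psi> = \<alpha> powr ka * ((\<alpha> - 1 / t) * (\<alpha> + t)) powr ((kb - 2) / 2) * (1 + 1 / t^2)
        / (2 * Zc ka * Zc kb * Zc kc)"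
      have psi0: "\<psi> \<ge> 0" unfolding \<psi>_def using Zc_pos kp
        by (intro divide_nonneg_pos mult_nonneg_nonneg) (auto intro: add_nonneg_nonneg)
      have "(\<integral>\<^sup>+c. ennreal (c * jfun ka kb kc (c * \<alpha>) c t) \<partial>lborel)
          = (\<integral>\<^sup>+c. ennreal (indicator {0<..} c * c powr (2 * ka - 1) * exp (- (c^2 * Q) / 2)) * ennreal \<psi> \<partial>lborel)"
      proof (intro nn_integral_cong)
        fix c :: real
        show "ennreal (c * jfun ka kb kc (c * \<alpha>) c t) = ennreal (indicator {0<..} c * c powr (2 * ka - 1) * exp (- (c^2 * Q) / 2)) * ennreal \<psi>"
        proof (cases "c > 0")
          case True
          show ?thesis using W3[OF k t True \<open>\<alpha> > 1/t\<close>] True psi0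
            unfolding Q_def \<psi>_def by (simp add: ennreal_mult[symmetric] mult.assoc)
        qed (simp add: jfun_def)
      qed
      also have "\<dots> = (\<integral>\<^sup>+c. ennreal (indicator {0<..} c * c powr (2 * ka - 1) * exp (- (c^2 * Q) / 2)) \<partial>lborel) * ennreal \<psi>"
        by (rule nn_integral_multc) measurable
      also have "\<dots> = ennreal (Q powr (- (2 * ka) / 2)) * In (2 * ka) * ennreal \<psi>"
        unfolding W4[OF Q0] ..
      also have "\<dots> = ennreal (indicator {1/t<..} \<alpha> * phi ka kb kc t \<alpha>) * In (2 * ka)"
      proof -
        have m2: "- (2 * ka) / 2 = - ka" by simp
        have e: "Q powr (- ka) = \<alpha> powr (- ka) * (2 * \<alpha> + t - 1 / t) powr (- ka)"
          unfolding Q_def using a0 q2 by (metis powr_mult less_imp_le)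
        have aa: "\<alpha> powr (- ka) * \<alpha> powr ka = 1" using a0 by (simp add: powr_add[symmetric])
        have "Q powr (- (2 * ka) / 2) * \<psi> = (\<alpha> powr (- ka) * \<alpha> powr ka) * ((2 * \<alpha> + t - 1 / t) powr (- ka) *
           ((\<alpha> - 1 / t) * (\<alpha> + t)) powr ((kb - 2) / 2) * (1 + 1 / t^2) / (2 * Zc ka * Zc kb * Zc kc))"
          unfolding m2 e \<psi>_def by (simp only: mult_ac times_divide_eq_right)
        also have "\<dots> = phi ka kb kc t \<alpha>" unfolding aa phi_def by simp
        finally have ph: "Q powr (- (2 * ka) / 2) * \<psi> = phi ka kb kc t \<alpha>" .
        have "ennreal (Q powr (- (2 * ka) / 2)) * In (2 * ka) * ennreal \<psi> = ennreal (Q powr (- (2 * ka) / 2) * \<psi>) * In (2 * ka)"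
          using psi0 by (simp add: ennreal_mult mult_ac)
        thus ?thesis unfolding ph using True by simp
      qed
      finally show ?thesis .
    qed
  qed
  also have "\<dots> = (\<integral>\<^sup>+\<alpha>. ennreal (indicator {1/t<..} \<alpha> * phi ka kb kc t \<alpha>) \<partial>lborel) * In (2 * ka)"
    by (rule nn_integral_multc) (unfold phi_def, measurable)
  also have "\<dots> = ennreal (rho kc t / (2 * Zc ka * Zc kb * Zc kc)) * Dv ka kb * In (2 * ka)"
    unfolding W6[OF k t] ..
  finally show ?thesis .
qed


lemma Triple:
  fixes G :: "real \<Rightarrow> ennreal"
  assumes G[measurable]: "G \<in> borel_measurable borel" and x: "x \<noteq> 0"
    and k: "ka = kb + kc" "kb > 0" "kc > 0"
  shows "(\<integral>\<^sup>+a. (\<integral>\<^sup>+c. (\<integral>\<^sup>+b. G (condfun x (-x) a b c) * ennreal (chi_density ka a) * ennreal (chi_density kc c)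
            * ennreal (chi_density kb b) \<partial>lborel) \<partial>lborel) \<partial>lborel)
       = (\<integral>\<^sup>+t. G (Kf t) * ennreal (indicator {0<..} t * rho kc t) \<partial>lborel)
          * (ennreal (1 / (2 * Zc ka * Zc kb * Zc kc)) * Dv ka kb * In (2 * ka))"
proof -
  have kp: "ka > 0" "kb > 0" "kc > 0" using k by auto
  have "(\<integral>\<^sup>+a. (\<integral>\<^sup>+c. (\<integral>\<^sup>+b. G (condfun x (-x) a b c) * ennreal (chi_density ka a) * ennreal (chi_density kc c)
            * ennreal (chi_density kb b) \<partial>lborel) \<partial>lborel) \<partial>lborel)
      = (\<integral>\<^sup>+a. (\<integral>\<^sup>+c. (\<integral>\<^sup>+t. G (Kf t) * ennreal (jfun ka kb kc a c t) \<partial>lborel) \<partial>lborel) \<partial>lborel)"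
  proof (rule nn_integral_cong, rule nn_integral_cong)
    fix a c :: real
    show "(\<integral>\<^sup>+b. G (condfun x (-x) a b c) * ennreal (chi_density ka a) * ennreal (chi_density kc c)
            * ennreal (chi_density kb b) \<partial>lborel) = (\<integral>\<^sup>+t. G (Kf t) * ennreal (jfun ka kb kc a c t) \<partial>lborel)"
    proof (cases "a > 0 \<and> c > 0")
      case True
      hence a: "a > 0" and c: "c > 0" by auto
      have "(\<integral>\<^sup>+b. G (condfun x (-x) a b c) * ennreal (chi_density ka a) * ennreal (chi_density kc c)
            * ennreal (chi_density kb b) \<partial>lborel)
          = (\<integral>\<^sup>+b. (ennreal (chi_density ka a) * ennreal (chi_density kc c)) * (G (condfun x (-x) a b c) * ennreal (chi_density kb b)) \<partial>lborel)"
        by (intro nn_integral_cong) (simp add: mult_ac)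
      also have "\<dots> = (ennreal (chi_density ka a) * ennreal (chi_density kc c)) * (\<integral>\<^sup>+b. G (condfun x (-x) a b c) * ennreal (chi_density kb b) \<partial>lborel)"
        by (rule nn_integral_cmult) measurable
      also have "\<dots> = (ennreal (chi_density ka a) * ennreal (chi_density kc c)) *
          (\<integral>\<^sup>+t. G (Kf t) * ennreal (chi_density kb (Yf a c t) * Yd a c t) * indicator {c/a<..} t \<partial>lborel)"
        unfolding stepB[OF G x a c kp(2)] ..
      also have "\<dots> = (\<integral>\<^sup>+t. (ennreal (chi_density ka a) * ennreal (chi_density kc c)) *
          (G (Kf t) * ennreal (chi_density kb (Yf a c t) * Yd a c t) * indicator {c/a<..} t) \<partial>lborel)"
        by (rule nn_integral_cmult[symmetric]) (unfold Kf_def Yf_def Yd_def, measurable)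
      also have "\<dots> = (\<integral>\<^sup>+t. G (Kf t) * ennreal (jfun ka kb kc a c t) \<partial>lborel)"
      proof (rule nn_integral_cong)
        fix t
        show "(ennreal (chi_density ka a) * ennreal (chi_density kc c)) *
          (G (Kf t) * ennreal (chi_density kb (Yf a c t) * Yd a c t) * indicator {c/a<..} t) = G (Kf t) * ennreal (jfun ka kb kc a c t)"
        proof (cases "t > c / a")
          case True
          have "Yd a c t \<ge> 0" using Yf_pos[OF a c True] a c unfolding Yd_def
            by (intro divide_nonneg_pos mult_nonneg_nonneg) (auto intro: add_nonneg_nonneg)
          thus ?thesis using True a c chi_density_nonneg[OF kp(1)] chi_density_nonneg[OF kp(2)] chi_density_nonneg[OF kp(3)]
            by (simp add: jfun_def ennreal_mult mult_ac)
        qed (simp add: jfun_def)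
      qed
      finally show ?thesis .
    next
      case False
      hence "chi_density ka a = 0 \<or> chi_density kc c = 0" by (auto simp: chi_density_def)
      moreover have "jfun ka kb kc a c t = 0" for t using False unfolding jfun_def by auto
      ultimately show ?thesis by auto
    qed
  qed
  also have "\<dots> = (\<integral>\<^sup>+a. (\<integral>\<^sup>+t. (\<integral>\<^sup>+c. G (Kf t) * ennreal (jfun ka kb kc a c t) \<partial>lborel) \<partial>lborel) \<partial>lborel)"
    by (rule nn_integral_cong, rule lborel_pair.Fubini') (unfold Kf_def, measurable)
  also have "\<dots> = (\<integral>\<^sup>+t. (\<integral>\<^sup>+a. (\<integral>\<^sup>+c. G (Kf t) * ennreal (jfun ka kb kc a c t) \<partial>lborel) \<partial>lborel) \<partial>lborel)"
    by (rule lborel_pair.Fubini'[symmetric]) (unfold Kf_def, measurable)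
  also have "\<dots> = (\<integral>\<^sup>+t. (\<integral>\<^sup>+c. (\<integral>\<^sup>+a. G (Kf t) * ennreal (jfun ka kb kc a c t) \<partial>lborel) \<partial>lborel) \<partial>lborel)"
    by (rule nn_integral_cong, rule lborel_pair.Fubini'[symmetric]) (unfold Kf_def, measurable)
  also have "\<dots> = (\<integral>\<^sup>+t. G (Kf t) * ennreal (indicator {0<..} t * rho kc t)
          * (ennreal (1 / (2 * Zc ka * Zc kb * Zc kc)) * Dv ka kb * In (2 * ka)) \<partial>lborel)"
  proof (intro nn_integral_cong)
    fix t :: real
    have "(\<integral>\<^sup>+c. (\<integral>\<^sup>+a. G (Kf t) * ennreal (jfun ka kb kc a c t) \<partial>lborel) \<partial>lborel)
        = (\<integral>\<^sup>+c. G (Kf t) * (\<integral>\<^sup>+a. ennreal (jfun ka kb kc a c t) \<partial>lborel) \<partial>lborel)"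
      by (intro nn_integral_cong nn_integral_cmult) measurable
    also have "\<dots> = G (Kf t) * (\<integral>\<^sup>+c. (\<integral>\<^sup>+a. ennreal (jfun ka kb kc a c t) \<partial>lborel) \<partial>lborel)"
      by (rule nn_integral_cmult) measurable
    also have "\<dots> = G (Kf t) * ennreal (indicator {0<..} t * rho kc t)
          * (ennreal (1 / (2 * Zc ka * Zc kb * Zc kc)) * Dv ka kb * In (2 * ka))"
    proof (cases "t > 0")
      case True
      have r0: "rho kc t \<ge> 0" unfolding rho_def by simp
      have z: "Zc ka * Zc kb * Zc kc > 0" using Zc_pos kp by simp
      have "ennreal (rho kc t / (2 * Zc ka * Zc kb * Zc kc)) = ennreal (rho kc t) * ennreal (1 / (2 * Zc ka * Zc kb * Zc kc))"
        using r0 z by (simp add: ennreal_mult[symmetric])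
      thus ?thesis unfolding Wt[OF k True] using True by (simp add: mult_ac)
    next
      case False
      have "jfun ka kb kc a c t = 0" for a c
        using False unfolding jfun_def by (smt (verit) divide_pos_pos)
      thus ?thesis using False by simp
    qed
    finally show "(\<integral>\<^sup>+c. (\<integral>\<^sup>+a. G (Kf t) * ennreal (jfun ka kb kc a c t) \<partial>lborel) \<partial>lborel)
        = G (Kf t) * ennreal (indicator {0<..} t * rho kc t)
          * (ennreal (1 / (2 * Zc ka * Zc kb * Zc kc)) * Dv ka kb * In (2 * ka))" .
  qed
  also have "\<dots> = (\<integral>\<^sup>+t. G (Kf t) * ennreal (indicator {0<..} t * rho kc t) \<partial>lborel)
          * (ennreal (1 / (2 * Zc ka * Zc kb * Zc kc)) * Dv ka kb * In (2 * ka))"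
    by (rule nn_integral_multc) (unfold Kf_def rho_def, measurable)
  finally show ?thesis .
qed


definition gs :: "real \<Rightarrow> real \<Rightarrow> real" where
  "gs kc s = s powr (kc / 2 - 1) * (1 + s) powr (- kc)"

lemma Ioo01_as_UN: "{0<..<(1::real)} = (\<Union>n. {1 / (real n + 3)..1 - 1 / (real n + 3)})"
proof (intro equalityI subsetI)
  fix t :: real assume "t \<in> {0<..<1}"
  hence t: "t > 0" "1 - t > 0" by auto
  obtain n1 where n1: "inverse (real (Suc n1)) < t" using reals_Archimedean[OF t(1)] by auto
  obtain n2 where n2: "inverse (real (Suc n2)) < 1 - t" using reals_Archimedean[OF t(2)] by auto
  let ?n = "max n1 n2"
  have "1 / (real ?n + 3) \<le> 1 / Suc n1" "1 / (real ?n + 3) \<le> 1 / Suc n2"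
    by (intro divide_left_mono; simp)+
  hence "1 / (real ?n + 3) \<le> t" "t \<le> 1 - 1 / (real ?n + 3)" using n1 n2 by (auto simp: inverse_eq_divide)
  thus "t \<in> (\<Union>n. {1 / (real n + 3)..1 - 1 / (real n + 3)})" by auto
next
  fix t :: real assume "t \<in> (\<Union>n. {1 / (real n + 3)..1 - 1 / (real n + 3)})"
  then obtain n where "t \<in> {1 / (real n + 3)..1 - 1 / (real n + 3)}" by auto
  moreover have "1 / (real n + 3) > 0" by simp
  ultimately show "t \<in> {0<..<1}" by (smt (verit) atLeastAtMost_iff greaterThanLessThan_iff)
qed

lemma branch_hi:
  fixes G :: "real \<Rightarrow> ennreal"
  assumes G[measurable]: "G \<in> borel_measurable borel" and kc: "kc > 0"
  shows "(\<integral>\<^sup>+s. G s * ennreal (indicator {1<..} s * gs kc s) \<partial>lborel)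
       = 2 * (\<integral>\<^sup>+t. G (Kf t) * ennreal (indicator {1<..} t * rho kc t) \<partial>lborel)"
proof -
  define F where "F s = G s * ennreal (gs kc s)" for s
  have Fm[measurable]: "F \<in> borel_measurable borel" unfolding F_def gs_def by measurable
  have img: "(\<lambda>t. t^2) ` {1<..} = ({1<..} :: real set)"
  proof (intro equalityI subsetI)
    fix y assume "y \<in> (\<lambda>t. t^2) ` ({1<..} :: real set)"
    then obtain t where "t > 1" "y = t^2" by auto
    thus "y \<in> {1<..}" by (simp add: one_less_power)
  next
    fix y :: real assume "y \<in> {1<..}"
    hence "sqrt y > 1" "(sqrt y)^2 = y" by auto
    thus "y \<in> (\<lambda>t. t^2) ` {1<..}" by (intro image_eqI[of _ _ "sqrt y"]) auto
  qed
  have "(\<integral>\<^sup>+s. G s * ennreal (indicator {1<..} s * gs kc s) \<partial>lborel)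
      = (\<integral>\<^sup>+s. F s * indicator ((\<lambda>t. t^2) ` {1<..}) s \<partial>lborel)"
    unfolding img F_def by (intro nn_integral_cong) (auto simp: indicator_def)
  also have "\<dots> = (\<integral>\<^sup>+t. F (t^2) * ennreal (2 * t) * indicator {1<..} t \<partial>lborel)"
  proof (rule nn_subst_mono[OF Fm _ _ _ Ioi_as_UN])
    show "1 + 1 / real (Suc n) < 1 + 2 + real n" for n
    proof -
      have "1 / real (Suc n) \<le> 1" by simp
      thus ?thesis by linarith
    qed
    show "decseq (\<lambda>n. 1 + 1 / real (Suc n))" by (auto simp: decseq_def intro!: divide_left_mono)
    show "incseq (\<lambda>n. 1 + 2 + real n :: real)" by (auto simp: incseq_def)
    show "((\<lambda>t. t^2) has_real_derivative 2 * t) (at t)" for t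
      by (auto intro!: derivative_eq_intros)
    show "continuous_on {1<..} (\<lambda>t::real. 2 * t)" by (intro continuous_intros)
    show "0 \<le> 2 * t" if "t \<in> {1<..}" for t :: real using that by simp
  qed
  also have "\<dots> = (\<integral>\<^sup>+t. 2 * (G (Kf t) * ennreal (indicator {1<..} t * rho kc t)) \<partial>lborel)"
  proof (rule nn_integral_cong)
    fix t :: real
    show "F (t^2) * ennreal (2 * t) * indicator {1<..} t = 2 * (G (Kf t) * ennreal (indicator {1<..} t * rho kc t))"
    proof (cases "t > 1")
      case True
      have t0: "t > 0" using True by simp
      have k: "Kf t = t^2"
      proof -
        have "1 / t^2 \<le> 1" using True by (simp add: field_simps one_le_power less_imp_le)
        moreover have "1 \<le> t^2" using True by (simp add: one_le_power less_imp_le)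
        ultimately show ?thesis unfolding Kf_def by simp
      qed
      have t1: "1 + t^2 > 0" by (simp add: add_pos_nonneg)
      have "gs kc (t^2) * (2 * t) = 2 * rho kc t"
        unfolding gs_def rho_def
      proof (rule ln_inj_iff[THEN iffD1])
        show "0 < (t\<^sup>2) powr (kc / 2 - 1) * (1 + t\<^sup>2) powr - kc * (2 * t)" using t0 t1 by simp
        show "0 < 2 * (t powr (kc - 1) * (1 + t\<^sup>2) powr - kc)" using t0 t1 by simp
        have lt2: "ln (t^2) = 2 * ln t" using t0 by (simp add: ln_realpow)
        show "ln ((t\<^sup>2) powr (kc / 2 - 1) * (1 + t\<^sup>2) powr - kc * (2 * t)) = ln (2 * (t powr (kc - 1) * (1 + t\<^sup>2) powr - kc))"
          using t0 t1 by (simp add: ln_mult lt2) (simp add: algebra_simps)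
      qed
      moreover have "gs kc (t^2) \<ge> 0" unfolding gs_def by simp
      ultimately have e0: "gs kc (t^2) * (2 * t) = 2 * rho kc t" "gs kc (t^2) \<ge> 0" by auto
      have "ennreal (gs kc (t^2)) * ennreal (2 * t) = ennreal (gs kc (t^2) * (2 * t))"
        using e0(2) t0 by (simp add: ennreal_mult)
      also have "\<dots> = ennreal 2 * ennreal (rho kc t)" unfolding e0(1)
        by (rule ennreal_mult) (auto simp: rho_def)
      finally have e: "ennreal (gs kc (t^2)) * ennreal (2 * t) = 2 * ennreal (rho kc t)" by simp
      show ?thesis using True unfolding F_def k
        by (simp add: mult.assoc e) (simp add: mult_ac)
    qed simp
  qed
  also have "\<dots> = 2 * (\<integral>\<^sup>+t. G (Kf t) * ennreal (indicator {1<..} t * rho kc t) \<partial>lborel)"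
    by (rule nn_integral_cmult) (unfold Kf_def rho_def, measurable)
  finally show ?thesis .
qed

lemma branch_lo:
  fixes G :: "real \<Rightarrow> ennreal"
  assumes G[measurable]: "G \<in> borel_measurable borel" and kc: "kc > 0"
  shows "(\<integral>\<^sup>+s. G s * ennreal (indicator {1<..} s * gs kc s) \<partial>lborel)
       = 2 * (\<integral>\<^sup>+t. G (Kf t) * ennreal (indicator {0<..<1} t * rho kc t) \<partial>lborel)"
proof -
  define F where "F s = G s * ennreal (gs kc s)" for s
  have Fm[measurable]: "F \<in> borel_measurable borel" unfolding F_def gs_def by measurable
  have img: "(\<lambda>t. 1 / t^2) ` {0<..<1} = ({1<..} :: real set)"
  proof (intro equalityI subsetI)
    fix y assume "y \<in> (\<lambda>t. 1 / t^2) ` ({0<..<1} :: real set)"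
    then obtain t :: real where t: "0 < t" "t < 1" "y = 1 / t^2" by auto
    have "t^2 < 1" using t by (simp add: power_less_one_iff)
    moreover have "t^2 > 0" using t by simp
    ultimately show "y \<in> {1<..}" using t by simp
  next
    fix y :: real assume "y \<in> {1<..}"
    hence y: "y > 1" by simp
    have "1 / sqrt y > 0" "1 / sqrt y < 1" "1 / (1 / sqrt y)^2 = y" using y by (auto simp: field_simps)
    thus "y \<in> (\<lambda>t. 1 / t^2) ` {0<..<1}" by (intro image_eqI[of _ _ "1 / sqrt y"]) auto
  qed
  have "(\<integral>\<^sup>+s. G s * ennreal (indicator {1<..} s * gs kc s) \<partial>lborel)
      = (\<integral>\<^sup>+s. F s * indicator ((\<lambda>t. 1 / t^2) ` {0<..<1}) s \<partial>lborel)"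
    unfolding img F_def by (intro nn_integral_cong) (auto simp: indicator_def)
  also have "\<dots> = (\<integral>\<^sup>+t. F (1 / t^2) * ennreal (- (- 2 / t^3)) * indicator {0<..<1} t \<partial>lborel)"
  proof (rule nn_subst_antimono[OF Fm _ _ _ Ioo01_as_UN])
    show "1 / (real n + 3) < 1 - 1 / (real n + 3)" for n
    proof -
      have "1 / (real n + 3) \<le> 1 / 3" by (intro divide_left_mono) auto
      thus ?thesis by linarith
    qed
    show "decseq (\<lambda>n. 1 / (real n + 3))" by (auto simp: decseq_def intro!: divide_left_mono)
    show "incseq (\<lambda>n. 1 - 1 / (real n + 3))" by (auto simp: incseq_def intro!: divide_left_mono)
    show "((\<lambda>t. 1 / t^2) has_real_derivative - 2 / t^3) (at t)" if "t \<in> {0<..<1}" for t :: real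
    proof -
      have t0: "t \<noteq> 0" using that by auto
      show ?thesis
        apply (rule DERIV_cong)
         apply (rule derivative_eq_intros refl | use t0 in force)+
        using t0 apply (simp add: power2_eq_square power3_eq_cube field_simps)
        done
    qed
    show "continuous_on {0<..<1} (\<lambda>t::real. - 2 / t^3)" by (intro continuous_intros) auto
    show "- 2 / t^3 \<le> 0" if "t \<in> {0<..<1}" for t :: real using that by simp
  qed
  also have "\<dots> = (\<integral>\<^sup>+t. 2 * (G (Kf t) * ennreal (indicator {0<..<1} t * rho kc t)) \<partial>lborel)"
  proof (rule nn_integral_cong)
    fix t :: real
    show "F (1 / t^2) * ennreal (- (- 2 / t^3)) * indicator {0<..<1} t = 2 * (G (Kf t) * ennreal (indicator {0<..<1} t * rho kc t))"
    proof (cases "t \<in> {0<..<1}")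
      case True
      hence t0: "t > 0" "t < 1" by auto
      have k: "Kf t = 1 / t^2"
      proof -
        have "t^2 \<le> 1" using t0 by (simp add: power_le_one)
        moreover have "1 \<le> 1 / t^2" using \<open>t^2 \<le> 1\<close> t0 by simp
        ultimately have "t^2 \<le> 1 / t^2" by linarith
        thus ?thesis unfolding Kf_def by simp
      qed
      have t1: "1 + t^2 > 0" by (simp add: add_pos_nonneg)
      have e1: "gs kc (1 / t^2) * (2 / t^3) = 2 * rho kc t"
        unfolding gs_def rho_def
      proof (rule ln_inj_iff[THEN iffD1])
        show "0 < (1 / t\<^sup>2) powr (kc / 2 - 1) * (1 + 1 / t\<^sup>2) powr - kc * (2 / t ^ 3)"
        proof -
          have "1 + 1 / t^2 > 0" by (simp add: add_pos_nonneg)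
          thus ?thesis using t0 by (intro mult_pos_pos divide_pos_pos) auto
        qed
        show "0 < 2 * (t powr (kc - 1) * (1 + t\<^sup>2) powr - kc)" using t0 t1 by simp
        have lt2: "ln (t^2) = 2 * ln t" "ln (t^3) = 3 * ln t" using t0 by (simp_all add: ln_realpow)
        have l3: "ln (1 + 1 / t^2) = ln (1 + t^2) - 2 * ln t"
        proof -
          have "1 + 1 / t^2 = (1 + t^2) / t^2" using t0 by (simp add: field_simps)
          thus ?thesis using t0 t1 lt2 by (simp add: ln_div)
        qed
        show "ln ((1 / t\<^sup>2) powr (kc / 2 - 1) * (1 + 1 / t\<^sup>2) powr - kc * (2 / t ^ 3)) = ln (2 * (t powr (kc - 1) * (1 + t\<^sup>2) powr - kc))"
        proof -
          have t2: "1 + 1 / t^2 > 0" by (simp add: add_pos_nonneg)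
          show ?thesis using t0 t1 t2 by (simp add: ln_mult ln_div lt2 l3) (simp add: algebra_simps)
        qed
      qed
      have e0: "gs kc (1 / t^2) \<ge> 0" "rho kc t \<ge> 0" unfolding gs_def rho_def by simp_all
      have "ennreal (gs kc (1 / t^2)) * ennreal (- (- 2 / t^3)) = ennreal (gs kc (1 / t^2)) * ennreal (2 / t^3)"
        by simp
      also have "\<dots> = ennreal (gs kc (1 / t^2) * (2 / t^3))"
        by (rule ennreal_mult[symmetric]) (use e0 t0 in auto)
      also have "\<dots> = ennreal 2 * ennreal (rho kc t)" unfolding e1
        by (rule ennreal_mult) (use e0 in auto)
      finally have e: "ennreal (gs kc (1 / t^2)) * ennreal (- (- 2 / t^3)) = 2 * ennreal (rho kc t)" by simp
      hence e': "ennreal (2 / t ^ 3) * ennreal (gs kc (1 / t^2)) = 2 * ennreal (rho kc t)" by (simp add: mult.commute)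
      have "F (1 / t^2) * ennreal (- (- 2 / t^3)) * indicator {0<..<1} t
          = G (1 / t^2) * (ennreal (gs kc (1 / t^2)) * ennreal (- (- 2 / t^3)))"
        using True by (simp add: F_def indicator_def mult.assoc)
      also have "\<dots> = G (1 / t^2) * (2 * ennreal (rho kc t))" by (simp only: e)
      also have "\<dots> = 2 * (G (Kf t) * ennreal (indicator {0<..<1} t * rho kc t))"
        using True unfolding k by (simp add: mult_ac indicator_def)
      finally show ?thesis .
    qed simp
  qed
  also have "\<dots> = 2 * (\<integral>\<^sup>+t. G (Kf t) * ennreal (indicator {0<..<1} t * rho kc t) \<partial>lborel)"
    by (rule nn_integral_cmult) (unfold Kf_def rho_def, measurable)
  finally show ?thesis .
qed

lemma stepF:
  fixes G :: "real \<Rightarrow> ennreal"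
  assumes G[measurable]: "G \<in> borel_measurable borel" and kc: "kc > 0"
  shows "(\<integral>\<^sup>+t. G (Kf t) * ennreal (indicator {0<..} t * rho kc t) \<partial>lborel)
       = (\<integral>\<^sup>+s. G s * ennreal (indicator {1<..} s * gs kc s) \<partial>lborel)"
proof -
  define X where "X = (\<integral>\<^sup>+t. G (Kf t) * ennreal (indicator {1<..} t * rho kc t) \<partial>lborel)"
  define Y where "Y = (\<integral>\<^sup>+t. G (Kf t) * ennreal (indicator {0<..<1} t * rho kc t) \<partial>lborel)"
  define I where "I = (\<integral>\<^sup>+s. G s * ennreal (indicator {1<..} s * gs kc s) \<partial>lborel)"
  have hX: "I = 2 * X" unfolding I_def X_def by (rule branch_hi[OF G kc])
  have hY: "I = 2 * Y" unfolding I_def Y_def by (rule branch_lo[OF G kc])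
  have "(2::ennreal) * X = 2 * Y" using hX hY by simp
  hence XY: "X = Y" by (subst (asm) ennreal_mult_cancel_left) auto
  have "(\<integral>\<^sup>+t. G (Kf t) * ennreal (indicator {0<..} t * rho kc t) \<partial>lborel)
      = (\<integral>\<^sup>+t. G (Kf t) * ennreal (indicator {0<..<1} t * rho kc t) + G (Kf t) * ennreal (indicator {1<..} t * rho kc t) \<partial>lborel)"
  proof (rule nn_integral_cong_AE)
    have "AE t in lborel. t \<noteq> 1" by (rule AE_lborel_singleton)
    thus "AE t in lborel. G (Kf t) * ennreal (indicator {0<..} t * rho kc t)
        = G (Kf t) * ennreal (indicator {0<..<1} t * rho kc t) + G (Kf t) * ennreal (indicator {1<..} t * rho kc t)"
    proof eventually_elim
      fix t :: real assume "t \<noteq> 1"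
      thus "G (Kf t) * ennreal (indicator {0<..} t * rho kc t)
        = G (Kf t) * ennreal (indicator {0<..<1} t * rho kc t) + G (Kf t) * ennreal (indicator {1<..} t * rho kc t)"
        by (cases "t < 1"; cases "t > 0") (auto simp: indicator_def)
    qed
  qed
  also have "\<dots> = Y + X" unfolding X_def Y_def
    by (rule nn_integral_add) (unfold Kf_def rho_def, measurable)+
  also have "\<dots> = I" using hX XY by (simp add: mult_2)
  finally show ?thesis unfolding I_def .
qed

lemma rho_integral:
  assumes kc: "kc > 0"
  shows "2 * (\<integral>\<^sup>+t. ennreal (indicator {0<..} t * rho kc t) \<partial>lborel) = ennreal (Beta (kc / 2) (kc / 2))"
proof -
  define p where "p = kc / 2"
  have p: "p > 0" unfolding p_def using kc by simp
  define F where "F u = ennreal (u powr (p - 1) * (1 - u) powr (p - 1))" for u :: real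
  have Fm[measurable]: "F \<in> borel_measurable borel" unfolding F_def by measurable
  define g where "g t = t^2 / (1 + t^2)" for t :: real
  define g' where "g' t = 2 * t / (1 + t^2)^2" for t :: real
  have img: "g ` {0<..} = {0<..<1}"
  proof (intro equalityI subsetI)
    fix y assume "y \<in> g ` {0<..}"
    then obtain t :: real where t: "t > 0" "y = g t" by auto
    have "1 + t^2 > 0" by (simp add: add_pos_nonneg)
    note h1 = this
    have h2: "t^2 > 0" using t by simp
    have "t^2 / (1 + t^2) > 0" using h1 h2 by (rule divide_pos_pos[rotated])
    moreover have "t^2 / (1 + t^2) < 1" using h1 by (simp add: divide_less_eq)
    ultimately show "y \<in> {0<..<1}" using t unfolding g_def by simp
  next
    fix y :: real assume "y \<in> {0<..<1}"
    hence y: "0 < y" "y < 1" by auto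
    define t where "t = sqrt (y / (1 - y))"
    have t0: "t > 0" unfolding t_def using y by simp
    have "t^2 = y / (1 - y)" unfolding t_def using y by simp
    moreover have "1 + t^2 > 0" by (simp add: add_pos_nonneg)
    ultimately have "g t = y" unfolding g_def using y by (simp add: field_simps)
    thus "y \<in> g ` {0<..}" using t0 by force
  qed
  have "ennreal (Beta p p) = (\<integral>\<^sup>+u. ennreal (indicator {0<..<1} u * (u powr (p - 1) * (1 - u) powr (p - 1))) \<partial>lborel)"
  proof (rule nn_integral_has_integral_lebesgue[symmetric])
    show "((\<lambda>x. x powr (p - 1) * (1 - x) powr (p - 1)) has_integral Beta p p) {0<..<1}"
      using has_integral_Beta_real[of p p] p by (simp add: has_integral_Icc_iff_Ioo)
  qed simp
  also have "\<dots> = (\<integral>\<^sup>+u. F u * indicator (g ` {0<..}) u \<partial>lborel)"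
    unfolding img F_def by (intro nn_integral_cong) (auto simp: indicator_def)
  also have "\<dots> = (\<integral>\<^sup>+t. F (g t) * ennreal (g' t) * indicator {0<..} t \<partial>lborel)"
  proof (rule nn_subst_mono[OF Fm _ _ _ Ioi_as_UN])
    show "0 + 1 / real (Suc n) < 0 + 2 + real n" for n
    proof -
      have "1 / real (Suc n) \<le> 1" by simp
      thus ?thesis by linarith
    qed
    show "decseq (\<lambda>n. 0 + 1 / real (Suc n))" by (auto simp: decseq_def intro!: divide_left_mono)
    show "incseq (\<lambda>n. 0 + 2 + real n :: real)" by (auto simp: incseq_def)
    show "(g has_real_derivative g' t) (at t)" for t
    proof -
      have t1: "1 + t^2 \<noteq> 0" by (smt (verit) zero_le_power2)
      show ?thesis unfolding g_def[abs_def] g'_def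
        apply (rule DERIV_cong)
         apply (rule derivative_eq_intros refl | use t1 in force)+
        using t1 apply (simp add: power2_eq_square field_simps)
        done
    qed
    show "continuous_on {0<..} g'" unfolding g'_def[abs_def]
      by (intro continuous_intros) (auto, smt (verit) zero_le_power2)
    show "0 \<le> g' t" if "t \<in> {0<..}" for t using that unfolding g'_def by simp
  qed
  also have "\<dots> = (\<integral>\<^sup>+t. 2 * ennreal (indicator {0<..} t * rho kc t) \<partial>lborel)"
  proof (rule nn_integral_cong)
    fix t :: real
    show "F (g t) * ennreal (g' t) * indicator {0<..} t = 2 * ennreal (indicator {0<..} t * rho kc t)"
    proof (cases "t > 0")
      case True
      have t1: "1 + t^2 > 0" by (simp add: add_pos_nonneg)
      have e1: "(g t powr (p - 1) * (1 - g t) powr (p - 1)) * g' t = 2 * rho kc t"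
        unfolding g_def g'_def rho_def
      proof (rule ln_inj_iff[THEN iffD1])
        have "1 - t^2 / (1 + t^2) = 1 / (1 + t^2)" using t1 by (simp add: field_simps)
        note h = this
        show "0 < ((t\<^sup>2 / (1 + t\<^sup>2)) powr (p - 1) * (1 - t\<^sup>2 / (1 + t\<^sup>2)) powr (p - 1)) * (2 * t / (1 + t\<^sup>2)\<^sup>2)"
          unfolding h using True t1 by simp
        show "0 < 2 * (t powr (kc - 1) * (1 + t\<^sup>2) powr - kc)" using True t1 by simp
        have lt2: "ln (t^2) = 2 * ln t" "ln ((1 + t^2)^2) = 2 * ln (1 + t^2)" using True t1 by (simp_all add: ln_realpow)
        show "ln (((t\<^sup>2 / (1 + t\<^sup>2)) powr (p - 1) * (1 - t\<^sup>2 / (1 + t\<^sup>2)) powr (p - 1)) * (2 * t / (1 + t\<^sup>2)\<^sup>2)) =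
          ln (2 * (t powr (kc - 1) * (1 + t\<^sup>2) powr - kc))"
          unfolding h using True t1 by (simp add: ln_mult ln_div lt2) (simp add: p_def algebra_simps)
      qed
      have e0: "g t powr (p - 1) * (1 - g t) powr (p - 1) \<ge> 0" "g' t \<ge> 0" "rho kc t \<ge> 0"
        using True unfolding g'_def rho_def by simp_all
      have "F (g t) * ennreal (g' t) = ennreal ((g t powr (p - 1) * (1 - g t) powr (p - 1)) * g' t)"
        unfolding F_def using e0 by (simp add: ennreal_mult)
      also have "\<dots> = ennreal 2 * ennreal (rho kc t)" unfolding e1 by (rule ennreal_mult) (use e0 in auto)
      finally show ?thesis using True by simp
    qed simp
  qed
  also have "\<dots> = 2 * (\<integral>\<^sup>+t. ennreal (indicator {0<..} t * rho kc t) \<partial>lborel)"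
    by (rule nn_integral_cmult) (unfold rho_def, measurable)
  finally show ?thesis unfolding p_def by simp
qed

lemma gs_integral:
  assumes kc: "kc > 0"
  shows "2 * (\<integral>\<^sup>+s. ennreal (indicator {1<..} s * gs kc s) \<partial>lborel) = ennreal (Beta (kc / 2) (kc / 2))"
  using stepF[of "\<lambda>_. 1" kc] kc rho_integral[OF kc] by simp


lemma f_kappa_eq:
  assumes L: "L \<ge> 2" and b: "\<beta> > 0" and s: "\<sigma> > 0"
  shows "f_kappa L \<beta> \<sigma> = 2 / Beta (\<beta> * (real L - 1) / 2) (\<beta> * (real L - 1) / 2) * gs (\<beta> * (real L - 1)) \<sigma>"
proof -
  define kc where "kc = \<beta> * (real L - 1)"
  have kc: "kc > 0" unfolding kc_def using L b by simp
  have e1: "\<beta> * real L / 2 - \<beta> / 2 - 1 = kc / 2 - 1" unfolding kc_def by (simp add: algebra_simps)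
  have e2: "\<beta> * real L - \<beta> + 1 = kc + 1" unfolding kc_def by (simp add: algebra_simps)
  have e3: "- \<beta> * (real L - 1) = - kc" unfolding kc_def by simp
  have e4: "\<beta> / 2 * (real L - 1) = kc / 2" unfolding kc_def by simp
  have g1: "Gamma (kc + 1) = kc * Gamma kc" using kc by (intro Gamma_plus1) (auto elim!: nonpos_Ints_cases)
  have gp: "Gamma (kc / 2) > 0" "Gamma kc > 0" using kc by auto
  have B: "Beta (kc / 2) (kc / 2) = Gamma (kc / 2) ^ 2 / Gamma kc"
    unfolding Beta_def by (simp add: power2_eq_square)
  show ?thesis
    unfolding f_kappa_def e1 e2 e3 e4 kc_def[symmetric] g1 B gs_def using kc gp
    by (simp add: field_simps add.commute)
qed

lemma f_kappa_21:
  assumes "\<sigma> \<ge> 1"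
  shows "f_kappa 2 1 \<sigma> = 2 / (pi * sqrt \<sigma> * (\<sigma> + 1))"
proof -
  have s: "\<sigma> > 0" using assms by simp
  have h: "\<sigma> powr - (1 / 2) = 1 / sqrt \<sigma>" using s by (simp add: powr_minus_divide powr_half_sqrt)
  moreover have "(\<sigma> + 1) powr (- 1) = 1 / (\<sigma> + 1)" using s by (simp add: powr_minus_divide)
  moreover have "Gamma (2::real) = 1" using Gamma_fact[of 1] by simp
  ultimately show ?thesis unfolding f_kappa_def using s
    by (simp add: Gamma_one_half_real h)
qed

theorem mainTheorem5:
  fixes P :: "'s measure" and a b c :: "'s \<Rightarrow> real"
    and L :: nat and \<beta> x1 x2 :: real
  assumes "prob_space P"
    and "L \<ge> 2" and "\<beta> > 0"
    and "x1 = - x2" and "x1 \<noteq> 0"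
    and "distributed P lborel a (\<lambda>x. ennreal (chi_density (\<beta> * real L) x))"
    and "distributed P lborel b (\<lambda>x. ennreal (chi_density \<beta> x))"
    and "distributed P lborel c (\<lambda>x. ennreal (chi_density (\<beta> * (real L - 1)) x))"
    and "prob_space.indep_vars P (\<lambda>_. borel) (\<lambda>i. [a, b, c] ! i) {0, 1, 2}"
  shows "distributed P lborel (\<lambda>\<omega>. cond_number (Mmat x1 x2 (a \<omega>) (b \<omega>) (c \<omega>)))
           (\<lambda>\<sigma>. ennreal (indicator {1..} \<sigma> * f_kappa L \<beta> \<sigma>))
       \<and> (\<forall>\<sigma>\<ge>1. f_kappa 2 1 \<sigma> = 2 / (pi * sqrt \<sigma> * (\<sigma> + 1)))"
proof
  show "\<forall>\<sigma>\<ge>1. f_kappa 2 1 \<sigma> = 2 / (pi * sqrt \<sigma> * (\<sigma> + 1))" using f_kappa_21 by blast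
next
  interpret P: prob_space P by fact
  define ka where "ka = \<beta> * real L"
  define kb where "kb = \<beta>"
  define kc where "kc = \<beta> * (real L - 1)"
  have k: "ka = kb + kc" "kb > 0" "kc > 0"
    unfolding ka_def kb_def kc_def using assms(2,3) by (auto simp: algebra_simps)
  have x2: "x2 = - x1" using assms(4) by simp
  note x = assms(5)
  have Da: "distributed P lborel a (\<lambda>x. ennreal (chi_density ka x))" using assms(6) unfolding ka_def .
  have Db: "distributed P lborel b (\<lambda>x. ennreal (chi_density kb x))" using assms(7) unfolding kb_def .
  have Dc: "distributed P lborel c (\<lambda>x. ennreal (chi_density kc x))" using assms(8) unfolding kc_def .
  have [measurable]: "a \<in> borel_measurable P" "b \<in> borel_measurable P" "c \<in> borel_measurable P"
    using distributed_measurable[OF Da] distributed_measurable[OF Db] distributed_measurable[OF Dc]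
    by (simp_all add: measurable_lborel2)
  note ind = assms(9)
  define X where "X = (\<lambda>i. [a, b, c] ! i)"
  have X012: "X 0 = a" "X 1 = b" "X 2 = c" "X (Suc 0) = b" unfolding X_def by simp_all
  have ind0: "P.indep_var (PiM {0} (\<lambda>_. borel)) (\<lambda>\<omega>. restrict (\<lambda>i. X i \<omega>) {0})
      (PiM {2, 1} (\<lambda>_. borel)) (\<lambda>\<omega>. restrict (\<lambda>i. X i \<omega>) {2, 1})"
    by (rule P.indep_var_restrict[OF ind[folded X_def]]) auto
  have prodeq: "distr P lborel a \<Otimes>\<^sub>M distr P (lborel \<Otimes>\<^sub>M lborel) (\<lambda>\<omega>. (c \<omega>, b \<omega>))
      = distr P (lborel \<Otimes>\<^sub>M (lborel \<Otimes>\<^sub>M lborel)) (\<lambda>\<omega>. (a \<omega>, (c \<omega>, b \<omega>)))"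
  proof (rule pair_measure_eqI)
    show "sigma_finite_measure (distr P lborel a)"
      by (rule prob_space_imp_sigma_finite, rule P.prob_space_distr) (simp add: measurable_lborel2)
    show "sigma_finite_measure (distr P (lborel \<Otimes>\<^sub>M lborel) (\<lambda>\<omega>. (c \<omega>, b \<omega>)))"
      by (rule prob_space_imp_sigma_finite, rule P.prob_space_distr) measurable
    show "sets (distr P lborel a \<Otimes>\<^sub>M distr P (lborel \<Otimes>\<^sub>M lborel) (\<lambda>\<omega>. (c \<omega>, b \<omega>)))
      = sets (distr P (lborel \<Otimes>\<^sub>M (lborel \<Otimes>\<^sub>M lborel)) (\<lambda>\<omega>. (a \<omega>, (c \<omega>, b \<omega>))))"
      by simp
    fix A B assume A: "A \<in> sets (distr P lborel a)" and B: "B \<in> sets (distr P (lborel \<Otimes>\<^sub>M lborel) (\<lambda>\<omega>. (c \<omega>, b \<omega>)))"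
    hence A': "A \<in> sets borel" and B': "B \<in> sets (borel \<Otimes>\<^sub>M borel)" by simp_all
    define XA where "XA = (\<lambda>f. f 0) -` A \<inter> space (PiM {0::nat} (\<lambda>_. borel :: real measure))"
    define XB where "XB = (\<lambda>f. (f 2, f 1)) -` B \<inter> space (PiM {2::nat, 1} (\<lambda>_. borel :: real measure))"
    have XA: "XA \<in> sets (PiM {0} (\<lambda>_. borel))" unfolding XA_def
      by (rule measurable_sets[OF _ A']) measurable
    have XB: "XB \<in> sets (PiM {2, 1} (\<lambda>_. borel))" unfolding XB_def
      by (rule measurable_sets[OF _ B']) measurable
    have pre1: "(\<lambda>\<omega>. restrict (\<lambda>i. X i \<omega>) {0}) -` XA \<inter> space P = a -` A \<inter> space P"
      unfolding XA_def by (auto simp: X012 space_PiM PiE_def extensional_def)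
    have pre2: "(\<lambda>\<omega>. restrict (\<lambda>i. X i \<omega>) {2, 1}) -` XB \<inter> space P = (\<lambda>\<omega>. (c \<omega>, b \<omega>)) -` B \<inter> space P"
      unfolding XB_def by (auto simp: X012 space_PiM PiE_def extensional_def)
    have pre3: "(\<lambda>\<omega>. (restrict (\<lambda>i. X i \<omega>) {0}, restrict (\<lambda>i. X i \<omega>) {2, 1})) -` (XA \<times> XB) \<inter> space P
        = (\<lambda>\<omega>. (a \<omega>, (c \<omega>, b \<omega>))) -` (A \<times> B) \<inter> space P"
      unfolding XA_def XB_def by (auto simp: X012 space_PiM PiE_def extensional_def)
    have "P.prob ((\<lambda>\<omega>. (a \<omega>, (c \<omega>, b \<omega>))) -` (A \<times> B) \<inter> space P)
        = P.prob (a -` A \<inter> space P) * P.prob ((\<lambda>\<omega>. (c \<omega>, b \<omega>)) -` B \<inter> space P)"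
      using P.indep_varD[OF ind0 XA XB] unfolding pre1 pre2 pre3 .
    moreover have "A \<times> B \<in> sets (borel \<Otimes>\<^sub>M (borel \<Otimes>\<^sub>M borel))" using A' B' by simp
    ultimately show "emeasure (distr P lborel a) A * emeasure (distr P (lborel \<Otimes>\<^sub>M lborel) (\<lambda>\<omega>. (c \<omega>, b \<omega>))) B
      = emeasure (distr P (lborel \<Otimes>\<^sub>M (lborel \<Otimes>\<^sub>M lborel)) (\<lambda>\<omega>. (a \<omega>, (c \<omega>, b \<omega>)))) (A \<times> B)"
      using A' B'
      by (simp add: emeasure_distr P.emeasure_eq_measure ennreal_mult[symmetric] measurable_lborel2)
  qed
  have icb: "P.indep_var lborel c lborel b"
  proof -
    have "P.indep_var lborel ((\<lambda>f. f 2) \<circ> (\<lambda>\<omega>. restrict (\<lambda>i. X i \<omega>) {2}))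
        lborel ((\<lambda>f. f 1) \<circ> (\<lambda>\<omega>. restrict (\<lambda>i. X i \<omega>) {1}))"
      by (intro P.indep_var_compose[OF P.indep_var_restrict[OF ind[folded X_def]]]) (auto simp: measurable_lborel2)
    moreover have "((\<lambda>f. f 2) \<circ> (\<lambda>\<omega>. restrict (\<lambda>i. X i \<omega>) {2})) = c" by (auto simp: fun_eq_iff X012)
    moreover have "((\<lambda>f. f 1) \<circ> (\<lambda>\<omega>. restrict (\<lambda>i. X i \<omega>) {1})) = b" by (auto simp: fun_eq_iff X012)
    ultimately show ?thesis by simp
  qed
  have sf: "sigma_finite_measure (lborel \<Otimes>\<^sub>M lborel :: (real \<times> real) measure)"
    unfolding lborel_prod by (rule lborel.sigma_finite_measure_axioms)
  have Dcb: "distributed P (lborel \<Otimes>\<^sub>M lborel) (\<lambda>\<omega>. (c \<omega>, b \<omega>))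
      (\<lambda>(u, v). ennreal (chi_density kc u) * ennreal (chi_density kb v))"
    by (rule P.distributed_joint_indep[OF lborel.sigma_finite_measure_axioms lborel.sigma_finite_measure_axioms Dc Db icb])
  have Dj: "distributed P (lborel \<Otimes>\<^sub>M (lborel \<Otimes>\<^sub>M lborel)) (\<lambda>\<omega>. (a \<omega>, (c \<omega>, b \<omega>)))
      (\<lambda>(x, y). ennreal (chi_density ka x) * (\<lambda>(u, v). ennreal (chi_density kc u) * ennreal (chi_density kb v)) y)"
    by (rule P.distributed_joint_indep'[OF lborel.sigma_finite_measure_axioms sf Da Dcb prodeq])
  define Cst where "Cst = ennreal (1 / (2 * Zc ka * Zc kb * Zc kc)) * Dv ka kb * In (2 * ka)"
  have KG: "(\<integral>\<^sup>+\<omega>. G (condfun x1 (-x1) (a \<omega>) (b \<omega>) (c \<omega>)) \<partial>P)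
      = (\<integral>\<^sup>+s. G s * ennreal (indicator {1<..} s * gs kc s) \<partial>lborel) * Cst"
    if G[measurable]: "G \<in> borel_measurable borel" for G :: "real \<Rightarrow> ennreal"
  proof -
    have "(\<integral>\<^sup>+\<omega>. G (condfun x1 (-x1) (a \<omega>) (b \<omega>) (c \<omega>)) \<partial>P)
      = (\<integral>\<^sup>+z. (\<lambda>(x, y). ennreal (chi_density ka x) * (\<lambda>(u, v). ennreal (chi_density kc u) * ennreal (chi_density kb v)) y) z
           * (\<lambda>(x, (u, v)). G (condfun x1 (-x1) x v u)) z \<partial>(lborel \<Otimes>\<^sub>M (lborel \<Otimes>\<^sub>M lborel)))"
      by (subst distributed_nn_integral[OF Dj]) (auto simp: case_prod_beta)
    also have "\<dots> = (\<integral>\<^sup>+x. (\<integral>\<^sup>+y. ennreal (chi_density ka x) * (ennreal (chi_density kc (fst y)) * ennreal (chi_density kb (snd y)))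
           * G (condfun x1 (-x1) x (snd y) (fst y)) \<partial>(lborel \<Otimes>\<^sub>M lborel)) \<partial>lborel)"
      by (subst sigma_finite_measure.nn_integral_fst[OF sf, symmetric]) (auto simp: case_prod_beta)
    also have "\<dots> = (\<integral>\<^sup>+x. (\<integral>\<^sup>+u. (\<integral>\<^sup>+v. G (condfun x1 (-x1) x v u) * ennreal (chi_density ka x) * ennreal (chi_density kc u)
            * ennreal (chi_density kb v) \<partial>lborel) \<partial>lborel) \<partial>lborel)"
      by (rule nn_integral_cong, subst lborel.nn_integral_fst[symmetric]) (auto simp: mult_ac)
    also have "\<dots> = (\<integral>\<^sup>+t. G (Kf t) * ennreal (indicator {0<..} t * rho kc t) \<partial>lborel) * Cst"
      unfolding Cst_def by (rule Triple[OF G x k])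
    also have "\<dots> = (\<integral>\<^sup>+s. G s * ennreal (indicator {1<..} s * gs kc s) \<partial>lborel) * Cst"
      unfolding stepF[OF G k(3)] ..
    finally show ?thesis .
  qed
  define B where "B = Beta (kc / 2) (kc / 2)"
  have B0: "B > 0" unfolding B_def Beta_def using k by simp
  have int1: "(\<integral>\<^sup>+s. ennreal (indicator {1<..} s * gs kc s) \<partial>lborel) = ennreal (B / 2)"
  proof -
    have "ennreal B = ennreal (2 * (B / 2))" by simp
    also have "\<dots> = ennreal 2 * ennreal (B / 2)" by (rule ennreal_mult) (use B0 in auto)
    finally have "ennreal B = 2 * ennreal (B / 2)" by simp
    hence "(2::ennreal) * (\<integral>\<^sup>+s. ennreal (indicator {1<..} s * gs kc s) \<partial>lborel) = 2 * ennreal (B / 2)"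
      using gs_integral[OF k(3)] unfolding B_def by simp
    thus ?thesis by (subst (asm) ennreal_mult_cancel_left) auto
  qed
  have "1 = (\<integral>\<^sup>+\<omega>. 1 \<partial>P)" using P.emeasure_space_1 by simp
  also have "\<dots> = ennreal (B / 2) * Cst" using KG[of "\<lambda>_. 1"] int1 by simp
  finally have C1: "ennreal (B / 2) * Cst = 1" ..
  have Cst: "Cst = ennreal (2 / B)"
  proof -
    have "Cst = (ennreal (B / 2) * ennreal (2 / B)) * Cst" using B0 by (simp add: ennreal_mult[symmetric])
    also have "\<dots> = (ennreal (B / 2) * Cst) * ennreal (2 / B)" by (simp add: mult_ac)
    also have "\<dots> = ennreal (2 / B)" unfolding C1 by simp
    finally show ?thesis .
  qed
  have meas_kappa: "(\<lambda>\<omega>. cond_number (Mmat x1 x2 (a \<omega>) (b \<omega>) (c \<omega>))) \<in> measurable P lborel"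
    unfolding cond_Mmat_condfun measurable_lborel2 by measurable
  have fK_meas: "(\<lambda>\<sigma>. ennreal (indicator {1..} \<sigma> * f_kappa L \<beta> \<sigma>)) \<in> borel_measurable lborel"
    unfolding f_kappa_def by measurable
  show "distributed P lborel (\<lambda>\<omega>. cond_number (Mmat x1 x2 (a \<omega>) (b \<omega>) (c \<omega>)))
           (\<lambda>\<sigma>. ennreal (indicator {1..} \<sigma> * f_kappa L \<beta> \<sigma>))"
    unfolding distributed_def
  proof (intro conjI fK_meas meas_kappa)
    show "distr P lborel (\<lambda>\<omega>. cond_number (Mmat x1 x2 (a \<omega>) (b \<omega>) (c \<omega>)))
        = density lborel (\<lambda>\<sigma>. ennreal (indicator {1..} \<sigma> * f_kappa L \<beta> \<sigma>))"
    proof (rule measure_eqI)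
      fix A assume "A \<in> sets (distr P lborel (\<lambda>\<omega>. cond_number (Mmat x1 x2 (a \<omega>) (b \<omega>) (c \<omega>))))"
      hence A[measurable]: "A \<in> sets borel" by simp
      have "emeasure (distr P lborel (\<lambda>\<omega>. cond_number (Mmat x1 x2 (a \<omega>) (b \<omega>) (c \<omega>)))) A
          = (\<integral>\<^sup>+\<omega>. indicator A (condfun x1 (-x1) (a \<omega>) (b \<omega>) (c \<omega>)) \<partial>P)"
      proof -
        have mk: "(\<lambda>\<omega>. condfun x1 (-x1) (a \<omega>) (b \<omega>) (c \<omega>)) \<in> measurable P lborel"
          unfolding measurable_lborel2 by measurable
        have "emeasure (distr P lborel (\<lambda>\<omega>. condfun x1 (-x1) (a \<omega>) (b \<omega>) (c \<omega>))) A
          = (\<integral>\<^sup>+y. indicator A y \<partial>distr P lborel (\<lambda>\<omega>. condfun x1 (-x1) (a \<omega>) (b \<omega>) (c \<omega>)))"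
          using A by (intro nn_integral_indicator[symmetric]) simp
        also have "\<dots> = (\<integral>\<^sup>+\<omega>. indicator A (condfun x1 (-x1) (a \<omega>) (b \<omega>) (c \<omega>)) \<partial>P)"
          by (rule nn_integral_distr[OF mk]) simp
        finally show ?thesis unfolding cond_Mmat_condfun x2 .
      qed
      also have "\<dots> = (\<integral>\<^sup>+s. indicator A s * ennreal (indicator {1<..} s * gs kc s) \<partial>lborel) * ennreal (2 / B)"
        using KG[of "indicator A"] Cst by simp
      also have "\<dots> = (\<integral>\<^sup>+s. indicator A s * ennreal (indicator {1<..} s * gs kc s) * ennreal (2 / B) \<partial>lborel)"
        by (rule nn_integral_multc[symmetric]) (unfold gs_def, measurable)
      also have "\<dots> = (\<integral>\<^sup>+\<sigma>. ennreal (indicator {1..} \<sigma> * f_kappa L \<beta> \<sigma>) * indicator A \<sigma> \<partial>lborel)"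
      proof (rule nn_integral_cong_AE)
        have "AE s in lborel. s \<noteq> 1" by (rule AE_lborel_singleton)
        thus "AE s in lborel. indicator A s * ennreal (indicator {1<..} s * gs kc s) * ennreal (2 / B)
            = ennreal (indicator {1..} s * f_kappa L \<beta> s) * indicator A s"
        proof eventually_elim
          fix s :: real assume "s \<noteq> 1"
          show "indicator A s * ennreal (indicator {1<..} s * gs kc s) * ennreal (2 / B)
            = ennreal (indicator {1..} s * f_kappa L \<beta> s) * indicator A s"
          proof (cases "s > 1")
            case True
            have "f_kappa L \<beta> s = 2 / B * gs kc s"
              using f_kappa_eq[OF assms(2,3), of s] True unfolding B_def kc_def by simp
            moreover have "gs kc s \<ge> 0" unfolding gs_def by simp
            ultimately show ?thesis using True B0
              by (simp add: ennreal_mult[symmetric] mult_ac indicator_def)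
          next
            case False
            thus ?thesis using \<open>s \<noteq> 1\<close> by (simp add: indicator_def)
          qed
        qed
      qed
      also have "\<dots> = emeasure (density lborel (\<lambda>\<sigma>. ennreal (indicator {1..} \<sigma> * f_kappa L \<beta> \<sigma>))) A"
        using fK_meas by (subst emeasure_density) auto
      finally show "emeasure (distr P lborel (\<lambda>\<omega>. cond_number (Mmat x1 x2 (a \<omega>) (b \<omega>) (c \<omega>)))) A
          = emeasure (density lborel (\<lambda>\<sigma>. ennreal (indicator {1..} \<sigma> * f_kappa L \<beta> \<sigma>))) A" .
    qed simp
  qed
qed


end
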